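(* Let $p$ be a prime and $G$ a finite abelian group of order $p^\alpha$ with layer type $\lambda_1\ge\lambda_2\ge\cdots\ge\lambda_r$. Then $$|G|^{-1}\prod_{i\ge1}p^{\lambda_i^2/4}\ \le\ |\mathrm{Sub}(G)|\ \le\ |G|^2\prod_{i\ge1}p^{\lambda_i^2/4}.$$
   Context: For an abelian $p$-group $G$, $\Omega_i(G)$ is the subgroup of elements of order dividing $p^i$; $\Omega_i(G)/\Omega_{i-1}(G)$ is elementary abelian of order $p^{\lambda_i}$, and the sequence $\lambda_1\ge\lambda_2\ge\cdots\ge\lambda_r$ (the nonzero $\lambda_i$) is the layer type of $G$. $\mathrm{Sub}(G)$ is the set of subgroups of $G$. *)

theory Defs
  imports "HOL-Algebra.Algebra" "HOL-Computational_Algebra.Primes"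
begin

definition Omega :: "('a, 'b) monoid_scheme \<Rightarrow> nat \<Rightarrow> nat \<Rightarrow> 'a set" where
  "Omega G p i = {x \<in> carrier G. x [^]\<^bsub>G\<^esub> (p ^ i) = \<one>\<^bsub>G\<^esub>}"

definition layer :: "('a, 'b) monoid_scheme \<Rightarrow> nat \<Rightarrow> nat \<Rightarrow> nat" where
  "layer G p i = multiplicity p (order ((G\<lparr>carrier := Omega G p i\<rparr>) Mod (Omega G p (i - 1))))"

definition Sub :: "('a, 'b) monoid_scheme \<Rightarrow> 'a set set" where
  "Sub G = {H. subgroup H G}"

end

theory Submission
  imports Defs
begin

locale pgrp = comm_group G for G (structure) +
  fixes p :: nat and \<alpha> :: nat
  assumes finG: "finite (carrier G)" and prp: "Factorial_Ring.prime p" and cardG: "card (carrier G) = p ^ \<alpha>"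
begin

lemma p_gt1: "p > 1" using prp prime_gt_1_nat by blast

lemma pow_alpha: "x \<in> carrier G \<Longrightarrow> x [^] (p ^ \<alpha>) = \<one>"
  using pow_order_eq_1[of x] cardG by (simp add: order_def)

lemma sub_card_dvd:
  assumes "subgroup A G" "subgroup B G" "A \<subseteq> B"
  shows "card A dvd card B"
proof -
  interpret B: group "G\<lparr>carrier := B\<rparr>" using subgroup.subgroup_is_group[OF assms(2)] is_group by blast
  have "subgroup A (G\<lparr>carrier := B\<rparr>)" using subgroup_incl assms by blast
  from B.lagrange[OF this] show ?thesis by (simp add: order_def) (metis dvd_triv_right)
qed

lemma sub_finite: "subgroup A G \<Longrightarrow> finite A"
  using finG subgroup.subset finite_subset by blast

lemma sub_card_pow:
  assumes "subgroup A G" shows "\<exists>k\<le>\<alpha>. card A = p ^ k"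
proof -
  have "card A dvd card (carrier G)" using sub_card_dvd[OF assms subgroup_self] subgroup.subset[OF assms] by blast
  then show ?thesis using cardG divides_primepow_nat[OF prp] by auto
qed

lemma sub_card_pos: "subgroup A G \<Longrightarrow> card A > 0"
  using sub_finite subgroup.one_closed card_gt_0_iff by blast

lemma sub_strict:
  assumes "subgroup A G" "subgroup B G" "A \<subset> B"
  shows "p * card A \<le> card B"
proof -
  obtain a where a: "card A = p ^ a" using sub_card_pow assms by blast
  obtain b where b: "card B = p ^ b" using sub_card_pow assms by blast
  have "card A < card B" using psubset_card_mono[OF sub_finite[OF assms(2)] assms(3)] .
  then have "a < b" using a b p_gt1 by (metis power_less_imp_less_exp)
  then have "p ^ Suc a \<le> p ^ b" using p_gt1 by (intro power_increasing) auto
  then show ?thesis using a b by simp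
qed

lemma sub_dvd_pow:
  assumes "subgroup A G" "subgroup B G" "A \<subseteq> B"
  shows "\<exists>k. card B = p ^ k * card A"
proof -
  obtain a where a: "card A = p ^ a" using sub_card_pow assms by blast
  obtain b where b: "card B = p ^ b" using sub_card_pow assms by blast
  have "card A \<le> card B" using card_mono[OF sub_finite[OF assms(2)] assms(3)] .
  then have "a \<le> b" using a b p_gt1 by (metis power_le_imp_le_exp)
  then have "card B = p ^ (b - a) * card A" using a b by (simp add: power_add[symmetric])
  then show ?thesis by blast
qed


definition pw :: "nat \<Rightarrow> 'a set \<Rightarrow> 'a set" where
  "pw j S = (\<lambda>x. x [^] (p ^ j)) ` S"

abbreviation Om :: "nat \<Rightarrow> 'a set" where "Om i \<equiv> Omega G p i"

lemma Om_sub: "subgroup (Om i) G"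
proof (rule subgroupI)
  show "Om i \<subseteq> carrier G" by (auto simp: Omega_def)
  show "Om i \<noteq> {}" using one_closed by (auto simp: Omega_def)
  show "inv a \<in> Om i" if "a \<in> Om i" for a
    using that by (auto simp: Omega_def nat_pow_inv)
  show "a \<otimes> b \<in> Om i" if "a \<in> Om i" "b \<in> Om i" for a b
    using that by (auto simp: Omega_def nat_pow_distrib)
qed

lemma Om_mono: "i \<le> j \<Longrightarrow> Om i \<subseteq> Om j"
proof
  fix x assume ij: "i \<le> j" and x: "x \<in> Om i"
  then obtain k where k: "j = i + k" using le_Suc_ex by blast
  have "x [^] (p ^ j) = (x [^] (p ^ i)) [^] (p ^ k)"
    using x by (simp add: Omega_def nat_pow_pow[symmetric] k power_add)
  then show "x \<in> Om j" using x by (simp add: Omega_def)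
qed

lemma Om_alpha: "\<alpha> \<le> i \<Longrightarrow> Om i = carrier G"
proof -
  assume "\<alpha> \<le> i"
  have "carrier G \<subseteq> Om \<alpha>" using pow_alpha by (auto simp: Omega_def)
  then show ?thesis using Om_mono[OF \<open>\<alpha> \<le> i\<close>] by (auto simp: Omega_def)
qed

lemma Om_0: "Om 0 = {\<one>}"
  by (auto simp: Omega_def)

lemma pw_sub: assumes "subgroup S G" shows "subgroup (pw j S) G"
proof (rule subgroupI)
  have S: "S \<subseteq> carrier G" using subgroup.subset[OF assms] .
  show "pw j S \<subseteq> carrier G" using S by (auto simp: pw_def)
  show "pw j S \<noteq> {}" using subgroup.one_closed[OF assms] by (auto simp: pw_def)
  show "inv a \<in> pw j S" if a: "a \<in> pw j S" for a
  proof -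
    obtain x where x: "x \<in> S" "a = x [^] (p ^ j)" using a unfolding pw_def by blast
    have "inv a = (inv x) [^] (p ^ j)" using x S by (auto simp: nat_pow_inv)
    moreover have "inv x \<in> S" using x subgroup.m_inv_closed[OF assms] by blast
    ultimately show ?thesis by (auto simp: pw_def)
  qed
  show "a \<otimes> b \<in> pw j S" if a: "a \<in> pw j S" and b: "b \<in> pw j S" for a b
  proof -
    obtain x where x: "x \<in> S" "a = x [^] (p ^ j)" using a unfolding pw_def by blast
    obtain y where y: "y \<in> S" "b = y [^] (p ^ j)" using b unfolding pw_def by blast
    have "a \<otimes> b = (x \<otimes> y) [^] (p ^ j)" using x y subsetD[OF S] by (simp add: nat_pow_distrib)
    moreover have "x \<otimes> y \<in> S" using x y subgroup.m_closed[OF assms] by blast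
    ultimately show ?thesis by (auto simp: pw_def)
  qed
qed

lemma sub_pow_closed: "subgroup S G \<Longrightarrow> x \<in> S \<Longrightarrow> x [^] (n::nat) \<in> S"
  by (induct n) (auto simp: subgroup.one_closed subgroup.m_closed)

lemma pw_subset: "subgroup S G \<Longrightarrow> pw j S \<subseteq> S"
  unfolding pw_def using sub_pow_closed by blast

lemma pw_pw: "S \<subseteq> carrier G \<Longrightarrow> pw i (pw j S) = pw (j + i) S"
proof -
  assume S: "S \<subseteq> carrier G"
  have "(x [^] (p ^ j)) [^] (p ^ i) = x [^] (p ^ (j + i))" if "x \<in> S" for x
    using subsetD[OF S that] by (simp add: nat_pow_pow power_add)
  then show ?thesis unfolding pw_def image_image by (intro image_cong) auto
qed

lemma pw_mono: "S \<subseteq> S2 \<Longrightarrow> pw j S \<subseteq> pw j S2"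
  unfolding pw_def by auto

lemma pw_0: "S \<subseteq> carrier G \<Longrightarrow> pw 0 S = S"
  unfolding pw_def by (auto simp: subset_iff)

lemma pw_alpha: assumes "subgroup S G" shows "pw \<alpha> S = {\<one>}"
proof -
  have "x [^] (p ^ \<alpha>) = \<one>" if "x \<in> S" for x using pow_alpha subgroup.subset[OF assms] that by blast
  then show ?thesis using subgroup.one_closed[OF assms] unfolding pw_def by force
qed

lemma ker_img:
  assumes H: "subgroup H G"
  shows "card H = card (H \<inter> Om j) * card (pw j H)"
proof -
  let ?f = "\<lambda>x. x [^] (p ^ j)"
  have Hc: "H \<subseteq> carrier G" using subgroup.subset[OF H] .
  have fH: "finite H" using sub_finite[OF H] .
  have eq: "H = (\<Union>y\<in>pw j H. {x\<in>H. ?f x = y})" unfolding pw_def by auto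
  have "card H = (\<Sum>y\<in>pw j H. card {x\<in>H. ?f x = y})"
    by (subst eq, rule card_UN_disjoint) (auto simp: pw_def fH)
  also have "\<dots> = (\<Sum>y\<in>pw j H. card (H \<inter> Om j))"
  proof (rule sum.cong[OF refl])
    fix y assume "y \<in> pw j H"
    then obtain h where h: "h \<in> H" "y = ?f h" unfolding pw_def by auto
    have hc: "h \<in> carrier G" using h Hc by blast
    have "bij_betw (\<lambda>x. x \<otimes> h) (H \<inter> Om j) {x\<in>H. ?f x = y}"
    proof (rule bij_betwI[where g = "\<lambda>x. x \<otimes> inv h"])
      show "(\<lambda>x. x \<otimes> h) \<in> H \<inter> Om j \<rightarrow> {x \<in> H. ?f x = y}"
        using h hc Hc by (auto simp: Omega_def nat_pow_distrib subgroup.m_closed[OF H])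
      show "(\<lambda>x. x \<otimes> inv h) \<in> {x \<in> H. ?f x = y} \<rightarrow> H \<inter> Om j"
      proof
        fix x assume x: "x \<in> {x \<in> H. ?f x = y}"
        then have xc: "x \<in> carrier G" using Hc by blast
        have "?f (x \<otimes> inv h) = ?f x \<otimes> inv (?f h)"
          using xc hc by (simp add: nat_pow_distrib nat_pow_inv)
        also have "\<dots> = \<one>" using x h hc by simp
        finally show "x \<otimes> inv h \<in> H \<inter> Om j"
          using x h hc xc subgroup.m_closed[OF H] subgroup.m_inv_closed[OF H] by (auto simp: Omega_def)
      qed
      show "x \<otimes> h \<otimes> inv h = x" if "x \<in> H \<inter> Om j" for x
        using that hc Hc by (auto simp: m_assoc)
      show "x \<otimes> inv h \<otimes> h = x" if "x \<in> {x \<in> H. ?f x = y}" for x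
        using that hc Hc by (auto simp: m_assoc)
    qed
    then show "card {x\<in>H. ?f x = y} = card (H \<inter> Om j)" by (simp add: bij_betw_same_card)
  qed
  finally show ?thesis by (simp add: mult.commute)
qed



definition Ep :: "nat \<Rightarrow> 'a set" where "Ep k = Om 1 \<inter> pw k (carrier G)"

lemma Ep_sub: "subgroup (Ep k) G"
  unfolding Ep_def by (intro subgroups_Inter_pair Om_sub pw_sub subgroup_self)

lemma pw_Om: "pw k (Om (Suc k)) = Ep k"
proof
  show "pw k (Om (Suc k)) \<subseteq> Ep k"
  proof
    fix y assume "y \<in> pw k (Om (Suc k))"
    then obtain x where x: "x \<in> Om (Suc k)" "y = x [^] (p ^ k)" unfolding pw_def by blast
    have xc: "x \<in> carrier G" using x by (simp add: Omega_def)
    have "y [^] (p ^ 1) = x [^] (p ^ Suc k)" using x xc by (simp add: nat_pow_pow mult.commute)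
    then show "y \<in> Ep k" using x xc by (auto simp: Ep_def Omega_def pw_def)
  qed
  show "Ep k \<subseteq> pw k (Om (Suc k))"
  proof
    fix y assume "y \<in> Ep k"
    then obtain x where x: "x \<in> carrier G" "y = x [^] (p ^ k)" "y [^] p = \<one>"
      unfolding pw_def Ep_def Omega_def by auto
    have "x [^] (p ^ Suc k) = \<one>" using x by (simp add: nat_pow_pow mult.commute)
    then show "y \<in> pw k (Om (Suc k))" using x unfolding pw_def Omega_def by auto
  qed
qed

lemma card_Om_Suc: "card (Om (Suc k)) = card (Om k) * card (Ep k)"
proof -
  have "card (Om (Suc k)) = card (Om (Suc k) \<inter> Om k) * card (pw k (Om (Suc k)))"
    using ker_img[OF Om_sub] by blast
  moreover have "Om (Suc k) \<inter> Om k = Om k" using Om_mono[of k "Suc k"] by auto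
  ultimately show ?thesis using pw_Om by simp
qed

lemma layer_Suc: "layer G p (Suc k) = multiplicity p (card (Ep k))"
proof -
  interpret B: group "G\<lparr>carrier := Om (Suc k)\<rparr>" using subgroup.subgroup_is_group[OF Om_sub] is_group by blast
  have "subgroup (Om k) (G\<lparr>carrier := Om (Suc k)\<rparr>)" using subgroup_incl Om_sub Om_mono by simp
  from B.lagrange[OF this] have "card (rcosets\<^bsub>G\<lparr>carrier := Om (Suc k)\<rparr>\<^esub> (Om k)) * card (Om k) = card (Om k) * card (Ep k)"
    by (simp add: order_def card_Om_Suc)
  then have "card (rcosets\<^bsub>G\<lparr>carrier := Om (Suc k)\<rparr>\<^esub> (Om k)) = card (Ep k)"
    using sub_card_pos[OF Om_sub, of k] by simp
  then show ?thesis unfolding layer_def by (simp add: FactGroup_def order_def)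
qed

abbreviation e :: "nat \<Rightarrow> nat" where "e k \<equiv> layer G p k"

lemma card_Ep: "card (Ep k) = p ^ e (Suc k)"
proof -
  obtain j where "card (Ep k) = p ^ j" using sub_card_pow[OF Ep_sub] by blast
  then show ?thesis using layer_Suc prp by (simp add: prime_elem_multiplicity_power_distrib)
qed

lemma card_Om: "card (Om i) = p ^ (\<Sum>k\<in>{1..i}. e k)"
proof (induction i)
  case 0 then show ?case by (simp add: Om_0)
next
  case (Suc i)
  have "{1..Suc i} = insert (Suc i) {1..i}" by auto
  then show ?case using Suc card_Om_Suc card_Ep by (simp add: power_add)
qed

lemma sum_e: "(\<Sum>k\<in>{1..\<alpha>}. e k) = \<alpha>"
proof -
  have "p ^ (\<Sum>k\<in>{1..\<alpha>}. e k) = p ^ \<alpha>" using card_Om[of \<alpha>] Om_alpha cardG by simp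
  then show ?thesis using p_gt1 by (simp add: power_inject_exp)
qed

lemma e_zero: "\<alpha> < k \<Longrightarrow> e k = 0"
proof -
  assume k: "\<alpha> < k"
  then obtain j where j: "k = Suc j" "\<alpha> \<le> j" by (cases k) auto
  have "card (Om (Suc j)) = card (Om j)" using Om_alpha j by simp
  then have "card (Ep j) = 1" using card_Om_Suc sub_card_pos[OF Om_sub, of j] by simp
  then show ?thesis using card_Ep j p_gt1 by simp
qed

lemma e_anti: "e (Suc (Suc k)) \<le> e (Suc k)"
proof -
  have "pw (Suc k) (carrier G) = pw k (pw 1 (carrier G))" using pw_pw[of "carrier G" k 1] by simp
  also have "\<dots> \<subseteq> pw k (carrier G)" using pw_mono pw_subset subgroup_self by blast
  finally have "Ep (Suc k) \<subseteq> Ep k" unfolding Ep_def by blast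
  then have "card (Ep (Suc k)) \<le> card (Ep k)" using sub_finite[OF Ep_sub] card_mono by blast
  then show ?thesis using card_Ep p_gt1 by simp
qed

end

context pgrp begin

definition ext :: "'a set \<Rightarrow> 'a \<Rightarrow> nat \<Rightarrow> 'a set" where
  "ext Y g m = {g [^] k \<otimes> y | k y. k < m \<and> y \<in> Y}"

lemma ext_sub:
  assumes Y: "subgroup Y G" and g: "g \<in> carrier G" and m: "m > 0" and gm: "g [^] m \<in> Y"
  shows "subgroup (ext Y g m) G" "Y \<subseteq> ext Y g m" "g \<in> ext Y g m" "card (ext Y g m) \<le> m * card Y"
proof -
  have Yc: "Y \<subseteq> carrier G" using subgroup.subset[OF Y] .
  have red: "g [^] k \<otimes> y \<in> ext Y g m" if y: "y \<in> Y" for k :: nat and y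
  proof -
    have "g [^] k = g [^] (k mod m) \<otimes> (g [^] m) [^] (k div m)"
      using g by (simp add: nat_pow_pow nat_pow_mult mult.commute)
    then have "g [^] k \<otimes> y = g [^] (k mod m) \<otimes> ((g [^] m) [^] (k div m) \<otimes> y)"
      using g y Yc by (simp add: m_assoc subsetD)
    moreover have "(g [^] m) [^] (k div m) \<otimes> y \<in> Y"
      using sub_pow_closed[OF Y gm] y subgroup.m_closed[OF Y] by blast
    ultimately show ?thesis unfolding ext_def using m mod_less_divisor by blast
  qed
  show "subgroup (ext Y g m) G"
  proof (rule subgroupI)
    show "ext Y g m \<subseteq> carrier G" unfolding ext_def using g Yc by auto
    show "ext Y g m \<noteq> {}" using red[OF subgroup.one_closed[OF Y]] by blast
    show "inv a \<in> ext Y g m" if a: "a \<in> ext Y g m" for a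
    proof -
      obtain k :: nat and y where ky: "a = g [^] k \<otimes> y" "y \<in> Y" using a unfolding ext_def by blast
      have yc: "y \<in> carrier G" using ky Yc by blast
      have "g [^] ((m - 1) * k) \<otimes> g [^] k = (g [^] m) [^] k"
        using g m by (simp add: nat_pow_pow nat_pow_mult algebra_simps)
      then have e1: "inv (g [^] k) = inv ((g [^] m) [^] k) \<otimes> g [^] ((m - 1) * k)"
        using g by (intro inv_equality) (simp_all add: m_assoc)
      have "inv a = inv y \<otimes> inv (g [^] k)" using ky g yc by (simp add: inv_mult_group)
      also have "\<dots> = g [^] ((m - 1) * k) \<otimes> (inv y \<otimes> inv ((g [^] m) [^] k))"
        using e1 g yc by (simp add: m_ac)
      moreover have "inv y \<otimes> inv ((g [^] m) [^] k) \<in> Y"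
        using ky Y gm sub_pow_closed subgroup.m_closed subgroup.m_inv_closed by metis
      ultimately show ?thesis using red by metis
    qed
    show "a \<otimes> b \<in> ext Y g m" if a: "a \<in> ext Y g m" and b: "b \<in> ext Y g m" for a b
    proof -
      obtain k :: nat and y where ky: "a = g [^] k \<otimes> y" "y \<in> Y" using a unfolding ext_def by blast
      obtain k' :: nat and y' where ky': "b = g [^] k' \<otimes> y'" "y' \<in> Y" using b unfolding ext_def by blast
      have "a \<otimes> b = g [^] (k + k') \<otimes> (y \<otimes> y')"
        using ky ky' g Yc by (simp add: m_ac nat_pow_mult[symmetric] subsetD)
      then show ?thesis using red ky ky' subgroup.m_closed[OF Y] by metis
    qed
  qed
  show "Y \<subseteq> ext Y g m"
  proof
    fix y assume "y \<in> Y" then show "y \<in> ext Y g m" using red[of y 0] Yc by (auto simp: subsetD)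
  qed
  show "g \<in> ext Y g m" using red[OF subgroup.one_closed[OF Y], of 1] g by simp
  have "ext Y g m = (\<lambda>(k, y). g [^] k \<otimes> y) ` ({..<m} \<times> Y)" unfolding ext_def by auto
  then have "card (ext Y g m) \<le> card ({..<m} \<times> Y)"
    using sub_finite[OF Y] by (metis card_image_le finite_SigmaI finite_lessThan)
  then show "card (ext Y g m) \<le> m * card Y" by (simp add: card_cartesian_product)
qed

lemma gen_bound:
  assumes N: "subgroup N G"
    and ts: "\<forall>s\<in>set ss. t s \<in> carrier G \<and> m s > 0 \<and> t s [^] m s \<in> N"
  shows "card (generate G (N \<union> t ` set ss)) \<le> (\<Prod>s\<leftarrow>ss. m s) * card N"
  using ts
proof (induction ss)
  case Nil
  have "generate G N \<subseteq> N" using generate_subgroup_incl[OF subset_refl N] .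
  moreover have "N \<subseteq> generate G N" using generate.incl[of _ N G] by blast
  ultimately have "generate G N = N" by (rule equalityI)
  then show ?case by simp
next
  case (Cons s ss)
  let ?Y = "generate G (N \<union> t ` set ss)"
  have NC: "N \<subseteq> carrier G" using subgroup.subset[OF N] .
  have "N \<union> t ` set ss \<subseteq> carrier G" using Cons.prems NC by auto
  then have Y: "subgroup ?Y G" by (rule generate_is_subgroup)
  have NtY: "N \<union> t ` set ss \<subseteq> ?Y" using generate.incl[of _ "N \<union> t ` set ss" G] by blast
  then have NY: "N \<subseteq> ?Y" by blast
  have g: "t s \<in> carrier G" "m s > 0" "t s [^] m s \<in> ?Y" using Cons.prems NY by auto
  note E = ext_sub[OF Y g]
  have "N \<union> t ` set (s # ss) = insert (t s) (N \<union> t ` set ss)" by auto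
  also have "\<dots> \<subseteq> ext ?Y (t s) (m s)" using E(2,3) NtY by blast
  finally have "N \<union> t ` set (s # ss) \<subseteq> ext ?Y (t s) (m s)" .
  then have "generate G (N \<union> t ` set (s # ss)) \<subseteq> ext ?Y (t s) (m s)"
    using generate_subgroup_incl E(1) by blast
  then have "card (generate G (N \<union> t ` set (s # ss))) \<le> card (ext ?Y (t s) (m s))"
    using sub_finite[OF E(1)] card_mono by blast
  also have "\<dots> \<le> m s * card ?Y" using E(4) .
  also have "\<dots> \<le> m s * ((\<Prod>s\<leftarrow>ss. m s) * card N)" using Cons by simp
  finally show ?case by (simp add: mult.assoc)
qed

end

context pgrp begin

lemma gen_Om_bound:
  assumes ts: "\<forall>s\<in>set ss. t s \<in> Om (c s)"
  shows "card (generate G (t ` set ss) \<inter> Om i) \<le> (\<Prod>s\<leftarrow>ss. p ^ min (c s) i)"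
proof -
  let ?H = "generate G (t ` set ss)"
  have tc: "t ` set ss \<subseteq> carrier G" using ts by (auto simp: Omega_def)
  have H: "subgroup ?H G" using generate_is_subgroup[OF tc] .
  let ?N = "pw i ?H"
  have N: "subgroup ?N G" using pw_sub[OF H] .
  have NH: "?N \<subseteq> ?H" using pw_subset[OF H] .
  have tH: "t ` set ss \<subseteq> ?H" using generate.incl[of _ "t ` set ss" G] by blast
  have eq: "generate G (?N \<union> t ` set ss) = ?H"
  proof
    show "generate G (?N \<union> t ` set ss) \<subseteq> ?H" using NH tH generate_subgroup_incl[OF _ H] by blast
    show "?H \<subseteq> generate G (?N \<union> t ` set ss)" using mono_generate[of "t ` set ss" "?N \<union> t ` set ss"] by blast
  qed
  have cond: "\<forall>s\<in>set ss. t s \<in> carrier G \<and> p ^ min (c s) i > 0 \<and> t s [^] (p ^ min (c s) i) \<in> ?N"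
  proof
    fix s assume s: "s \<in> set ss"
    have tsc: "t s \<in> carrier G" and tsO: "t s [^] (p ^ c s) = \<one>" using ts s by (auto simp: Omega_def)
    have "t s [^] (p ^ min (c s) i) \<in> ?N"
    proof (cases "c s \<le> i")
      case True
      then show ?thesis using tsO subgroup.one_closed[OF N] by (simp add: min_def)
    next
      case False
      then have "t s [^] (p ^ min (c s) i) = t s [^] (p ^ i)" by (simp add: min_def)
      moreover have "t s \<in> ?H" using tH s by blast
      then have "t s [^] (p ^ i) \<in> pw i ?H" unfolding pw_def by (rule imageI)
      ultimately show ?thesis by simp
    qed
    then show "t s \<in> carrier G \<and> p ^ min (c s) i > 0 \<and> t s [^] (p ^ min (c s) i) \<in> ?N"
      using tsc p_gt1 by simp
  qed
  have "card ?H \<le> (\<Prod>s\<leftarrow>ss. p ^ min (c s) i) * card ?N"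
    using gen_bound[OF N cond] unfolding eq .
  moreover have "card ?H = card (?H \<inter> Om i) * card ?N" using ker_img[OF H] .
  ultimately have "card (?H \<inter> Om i) * card ?N \<le> (\<Prod>s\<leftarrow>ss. p ^ min (c s) i) * card ?N" by simp
  then show ?thesis using sub_card_pos[OF N] by (simp only: mult_le_cancel2)
qed

lemma count_lower:
  fixes r :: nat and c :: "nat \<Rightarrow> nat"
  shows "(\<Prod>s<r. card (Om (c s))) \<le> card (Sub G) * p ^ (\<Sum>s<r. \<Sum>s'<r. min (c s') (c s))"
proof -
  let ?T = "PiE {..<r} (\<lambda>s. Om (c s))"
  let ?g = "\<lambda>t. generate G (t ` {..<r})"
  let ?M = "p ^ (\<Sum>s<r. \<Sum>s'<r. min (c s') (c s))"
  have subfin: "finite (Sub G)"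
  proof -
    have "Sub G \<subseteq> Pow (carrier G)" unfolding Sub_def using subgroup.subset by blast
    then show ?thesis using finG finite_subset by blast
  qed
  have finT: "finite ?T" by (rule finite_PiE) (auto intro: sub_finite[OF Om_sub])
  have cov: "?T \<subseteq> (\<Union>H\<in>Sub G. {t\<in>?T. ?g t = H})"
  proof
    fix t assume t: "t \<in> ?T"
    have "t ` {..<r} \<subseteq> carrier G" using t by (auto simp: Omega_def PiE_def Pi_def)
    then have "?g t \<in> Sub G" unfolding Sub_def using generate_is_subgroup by blast
    then show "t \<in> (\<Union>H\<in>Sub G. {t\<in>?T. ?g t = H})" using t by blast
  qed
  have each: "card {t\<in>?T. ?g t = H} \<le> ?M" for H
  proof (cases "{t\<in>?T. ?g t = H} = {}")
    case True show ?thesis unfolding True by simp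
  next
    case False
    then obtain t0 where t0: "t0 \<in> ?T" "?g t0 = H" by blast
    have ts0: "\<forall>s\<in>set [0..<r]. t0 s \<in> Om (c s)"
    proof
      fix s assume "s \<in> set [0..<r]"
      then have "s \<in> {..<r}" by simp
      then show "t0 s \<in> Om (c s)" using PiE_mem[OF t0(1)] by blast
    qed
    have "{t\<in>?T. ?g t = H} \<subseteq> PiE {..<r} (\<lambda>s. H \<inter> Om (c s))"
    proof
      fix t assume t: "t \<in> {t\<in>?T. ?g t = H}"
      have "t ` {..<r} \<subseteq> H" using t generate.incl[of _ "t ` {..<r}" G] by blast
      moreover have "t \<in> ?T" using t by blast
      ultimately show "t \<in> PiE {..<r} (\<lambda>s. H \<inter> Om (c s))" unfolding PiE_iff by blast
    qed
    then have "card {t\<in>?T. ?g t = H} \<le> card (PiE {..<r} (\<lambda>s. H \<inter> Om (c s)))"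
      by (intro card_mono finite_PiE) (auto intro: sub_finite[OF Om_sub])
    also have "\<dots> = (\<Prod>s<r. card (H \<inter> Om (c s)))" by (simp add: card_PiE)
    also have "\<dots> \<le> (\<Prod>s<r. p ^ (\<Sum>s'<r. min (c s') (c s)))"
    proof (rule prod_mono)
      fix s assume "s \<in> {..<r}"
      have "H = generate G (t0 ` set [0..<r])" using t0 by (simp add: atLeast0LessThan)
      then have "card (H \<inter> Om (c s)) \<le> (\<Prod>s'\<leftarrow>[0..<r]. p ^ min (c s') (c s))"
        using gen_Om_bound[OF ts0, of "c s"] by simp
      also have "\<dots> = (\<Prod>s'<r. p ^ min (c s') (c s))"
        by (simp add: prod.distinct_set_conv_list[symmetric] atLeast0LessThan)
      also have "\<dots> = p ^ (\<Sum>s'<r. min (c s') (c s))" by (simp add: power_sum)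
      finally show "0 \<le> card (H \<inter> Om (c s)) \<and> card (H \<inter> Om (c s)) \<le> p ^ (\<Sum>s'<r. min (c s') (c s))" by simp
    qed
    also have "\<dots> = ?M" by (simp add: power_sum)
    finally show ?thesis .
  qed
  have "(\<Prod>s<r. card (Om (c s))) = card ?T" by (simp add: card_PiE)
  also have "\<dots> \<le> card (\<Union>H\<in>Sub G. {t\<in>?T. ?g t = H})"
  proof (rule card_mono[OF _ cov])
    have "finite {t\<in>?T. ?g t = H}" for H by (rule finite_subset[OF _ finT]) blast
    then show "finite (\<Union>H\<in>Sub G. {t\<in>?T. ?g t = H})" using subfin by blast
  qed
  also have "\<dots> \<le> (\<Sum>H\<in>Sub G. card {t\<in>?T. ?g t = H})" by (rule card_UN_le[OF subfin])
  also have "\<dots> \<le> (\<Sum>H\<in>Sub G. ?M)" by (rule sum_mono) (rule each)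
  finally show ?thesis by simp
qed

end

lemma downset:
  assumes "\<And>k k'. 1 \<le> k \<Longrightarrow> k \<le> k' \<Longrightarrow> P k' \<Longrightarrow> P k"
  shows "{k\<in>{1..n::nat}. P k} = {1..card {k\<in>{1..n}. P k}}"
proof (induction n)
  case 0 then show ?case by simp
next
  case (Suc n)
  show ?case
  proof (cases "P (Suc n)")
    case True
    then have "{k\<in>{1..Suc n}. P k} = {1..Suc n}" using assms by auto
    then show ?thesis by simp
  next
    case False
    then have "{k\<in>{1..Suc n}. P k} = {k\<in>{1..n}. P k}" using le_Suc_eq by auto
    then show ?thesis using Suc by simp
  qed
qed

lemma sum_if_card: "finite A \<Longrightarrow> (\<Sum>k\<in>A. if P k then 1 else 0) = card {k\<in>A. P k}"
  by (simp add: sum.inter_filter[symmetric])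

context pgrp begin

lemma e_anti_gen: "1 \<le> k \<Longrightarrow> k \<le> k' \<Longrightarrow> e k' \<le> e k"
proof (induction k' rule: nat_induct)
  case 0 then show ?case by simp
next
  case (Suc n)
  show ?case
  proof (cases "k = Suc n")
    case True then show ?thesis by simp
  next
    case False
    then have "k \<le> n" "1 \<le> n" using Suc.prems by auto
    then obtain m where m: "n = Suc m" by (cases n) auto
    have "e (Suc n) \<le> e n" using e_anti[of m] m by simp
    then show ?thesis using Suc.IH[OF Suc.prems(1) \<open>k \<le> n\<close>] by simp
  qed
qed

definition R :: "nat \<Rightarrow> nat" where "R k = e k div 2"
definition lev :: "nat \<Rightarrow> nat" where "lev s = card {k\<in>{1..\<alpha>}. s < R k}"

lemma R_anti: "1 \<le> k \<Longrightarrow> k \<le> k' \<Longrightarrow> R k' \<le> R k"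
  unfolding R_def using e_anti_gen div_le_mono by blast

lemma lev_set: "{1..lev s} = {k\<in>{1..\<alpha>}. s < R k}"
  unfolding lev_def
  by (rule downset[symmetric]) (meson R_anti order_less_le_trans)

lemma sum_lev: "(\<Sum>k\<in>{1..lev s}. e k) = (\<Sum>k\<in>{1..\<alpha>}. if s < R k then e k else 0)"
  unfolding lev_set by (rule sum.inter_filter) simp

lemma min_lev: "min (lev s') (lev s) = (\<Sum>k\<in>{1..\<alpha>}. if s' < R k \<and> s < R k then 1 else 0)"
proof -
  have "min (lev s') (lev s) = card ({1..lev s'} \<inter> {1..lev s})" by (simp add: min_def)
  also have "\<dots> = card {k\<in>{1..\<alpha>}. s' < R k \<and> s < R k}" unfolding lev_set
    by (rule arg_cong[where f = card]) blast
  also have "\<dots> = (\<Sum>k\<in>{1..\<alpha>}. if s' < R k \<and> s < R k then 1 else 0)"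
    by (rule sum_if_card[symmetric]) simp
  finally show ?thesis .
qed

lemma R_le: "k \<in> {1..\<alpha>} \<Longrightarrow> {s. s < R 1 \<and> s < R k} = {..<R k}"
  using R_anti[of 1 k] by auto

lemma lower_nat:
  "p ^ (\<Sum>k\<in>{1..\<alpha>}. e k * R k) \<le> card (Sub G) * p ^ (\<Sum>k\<in>{1..\<alpha>}. R k * R k)"
proof -
  let ?r = "R 1"
  have A: "(\<Prod>s<?r. card (Om (lev s))) = p ^ (\<Sum>k\<in>{1..\<alpha>}. e k * R k)"
  proof -
    have "(\<Prod>s<?r. card (Om (lev s))) = (\<Prod>s<?r. p ^ (\<Sum>k\<in>{1..\<alpha>}. if s < R k then e k else 0))"
      unfolding card_Om sum_lev ..
    also have "\<dots> = p ^ (\<Sum>s<?r. \<Sum>k\<in>{1..\<alpha>}. if s < R k then e k else 0)" by (simp add: power_sum)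
    also have "(\<Sum>s<?r. \<Sum>k\<in>{1..\<alpha>}. if s < R k then e k else 0) = (\<Sum>k\<in>{1..\<alpha>}. \<Sum>s<?r. if s < R k then e k else 0)"
      by (rule sum.swap)
    also have "\<dots> = (\<Sum>k\<in>{1..\<alpha>}. e k * R k)"
    proof (rule sum.cong[OF refl])
      fix k assume k: "k \<in> {1..\<alpha>}"
      have "(\<Sum>s<?r. if s < R k then e k else 0) = (\<Sum>s\<in>{s\<in>{..<?r}. s < R k}. e k)"
        by (rule sum.inter_filter[symmetric]) simp
      also have "{s\<in>{..<?r}. s < R k} = {..<R k}" using R_le[OF k] by auto
      finally show "(\<Sum>s<?r. if s < R k then e k else 0) = e k * R k" by simp
    qed
    finally show ?thesis .
  qed
  have B: "(\<Sum>s<?r. \<Sum>s'<?r. min (lev s') (lev s)) = (\<Sum>k\<in>{1..\<alpha>}. R k * R k)"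
  proof -
    have "(\<Sum>s<?r. \<Sum>s'<?r. min (lev s') (lev s)) = (\<Sum>s<?r. \<Sum>s'<?r. \<Sum>k\<in>{1..\<alpha>}. if s' < R k \<and> s < R k then 1 else 0)"
      by (simp add: min_lev)
    also have "\<dots> = (\<Sum>s<?r. \<Sum>k\<in>{1..\<alpha>}. \<Sum>s'<?r. if s' < R k \<and> s < R k then 1 else 0)"
      by (rule sum.cong[OF refl], rule sum.swap)
    also have "\<dots> = (\<Sum>k\<in>{1..\<alpha>}. \<Sum>s<?r. \<Sum>s'<?r. if s' < R k \<and> s < R k then 1 else 0)"
      by (rule sum.swap)
    also have "\<dots> = (\<Sum>k\<in>{1..\<alpha>}. R k * R k)"
    proof (rule sum.cong[OF refl])
      fix k assume k: "k \<in> {1..\<alpha>}"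
      have "(\<Sum>s<?r. \<Sum>s'<?r. if s' < R k \<and> s < R k then 1 else 0) = (\<Sum>s<?r. if s < R k then (\<Sum>s'<?r. if s' < R k then 1 else 0) else (0::nat))"
        by (intro sum.cong refl) auto
      also have "\<dots> = (\<Sum>s<?r. if s < R k then R k else 0)"
      proof -
        have "(\<Sum>s'<?r. if s' < R k then 1 else 0) = card {s\<in>{..<?r}. s < R k}"
          by (rule sum_if_card) simp
        also have "\<dots> = R k" using R_le[OF k] by simp
        finally have eq: "(\<Sum>s'<?r. if s' < R k then 1 else 0) = R k" .
        show ?thesis unfolding eq ..
      qed
      also have "\<dots> = (\<Sum>s\<in>{s\<in>{..<?r}. s < R k}. R k)"
        by (rule sum.inter_filter[symmetric]) simp
      also have "\<dots> = card {s\<in>{..<?r}. s < R k} * R k" by simp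
      also have "\<dots> = R k * R k" using R_le[OF k] by simp
      finally show "(\<Sum>s<?r. \<Sum>s'<?r. if s' < R k \<and> s < R k then 1 else 0) = R k * R k" .
    qed
    finally show ?thesis .
  qed
  show ?thesis using count_lower[where r = ?r and c = lev] A B by simp
qed

end

context pgrp begin

lemma prod_card:
  assumes B: "subgroup B G" and F: "subgroup F G"
  shows "card B * card F = card (B <#> F) * card (B \<inter> F)"
proof -
  have Bc: "B \<subseteq> carrier G" and Fc: "F \<subseteq> carrier G" using B F subgroup.subset by auto
  have fB: "finite B" and fF: "finite F" using sub_finite B F by auto
  let ?fib = "\<lambda>z. {q\<in>B \<times> F. fst q \<otimes> snd q = z}"
  have eq: "B \<times> F = (\<Union>z\<in>B <#> F. ?fib z)" unfolding set_mult_def by fastforce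
  have "card (B \<times> F) = (\<Sum>z\<in>B <#> F. card (?fib z))"
    by (subst eq, rule card_UN_disjoint) (auto simp: set_mult_def fB fF)
  also have "\<dots> = (\<Sum>z\<in>B <#> F. card (B \<inter> F))"
  proof (rule sum.cong[OF refl])
    fix z assume "z \<in> B <#> F"
    then obtain b0 f0 where b0: "b0 \<in> B" and f0: "f0 \<in> F" and z: "z = b0 \<otimes> f0"
      unfolding set_mult_def by auto
    have b0c: "b0 \<in> carrier G" and f0c: "f0 \<in> carrier G" using b0 f0 Bc Fc by auto
    have "bij_betw (\<lambda>c. (b0 \<otimes> c, inv c \<otimes> f0)) (B \<inter> F) (?fib z)"
    proof (rule bij_betwI[where g = "\<lambda>q. inv b0 \<otimes> fst q"])
      show "(\<lambda>c. (b0 \<otimes> c, inv c \<otimes> f0)) \<in> B \<inter> F \<rightarrow> ?fib z"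
      proof
        fix c assume c: "c \<in> B \<inter> F"
        then have cc: "c \<in> carrier G" using Bc by auto
        have "b0 \<otimes> c \<in> B" using b0 c subgroup.m_closed[OF B] by auto
        moreover have "inv c \<otimes> f0 \<in> F" using f0 c subgroup.m_closed[OF F] subgroup.m_inv_closed[OF F] by auto
        moreover have "b0 \<otimes> c \<otimes> (inv c \<otimes> f0) = z" using z b0c f0c cc by (simp add: m_assoc[symmetric] r_inv)
          (simp add: m_assoc)
        ultimately show "(b0 \<otimes> c, inv c \<otimes> f0) \<in> ?fib z" by simp
      qed
      show "(\<lambda>q. inv b0 \<otimes> fst q) \<in> ?fib z \<rightarrow> B \<inter> F"
      proof
        fix q assume q: "q \<in> ?fib z"
        obtain b f where bf: "q = (b, f)" by (cases q)
        have b: "b \<in> B" and f: "f \<in> F" and bfz: "b \<otimes> f = b0 \<otimes> f0" using q bf z by auto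
        have bc: "b \<in> carrier G" and fc: "f \<in> carrier G" using b f Bc Fc by auto
        have "inv b0 \<otimes> b = f0 \<otimes> inv f"
        proof -
          have "inv b0 \<otimes> b = inv b0 \<otimes> (b \<otimes> f) \<otimes> inv f" using bc fc b0c by (simp add: m_assoc r_inv)
          also have "\<dots> = inv b0 \<otimes> (b0 \<otimes> f0) \<otimes> inv f" using bfz by simp
          also have "\<dots> = f0 \<otimes> inv f" using b0c f0c fc by (simp add: m_assoc[symmetric] l_inv)
          finally show ?thesis .
        qed
        moreover have "inv b0 \<otimes> b \<in> B" using b b0 subgroup.m_closed[OF B] subgroup.m_inv_closed[OF B] by auto
        moreover have "f0 \<otimes> inv f \<in> F" using f f0 subgroup.m_closed[OF F] subgroup.m_inv_closed[OF F] by auto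
        ultimately show "inv b0 \<otimes> fst q \<in> B \<inter> F" using bf by simp
      qed
      show "inv b0 \<otimes> fst (b0 \<otimes> c, inv c \<otimes> f0) = c" if "c \<in> B \<inter> F" for c
        using that b0c Bc by (auto simp: m_assoc[symmetric])
      show "(b0 \<otimes> (inv b0 \<otimes> fst q), inv (inv b0 \<otimes> fst q) \<otimes> f0) = q" if q: "q \<in> ?fib z" for q
      proof -
        obtain b f where bf: "q = (b, f)" by (cases q)
        have b: "b \<in> B" and f: "f \<in> F" and bfz: "b \<otimes> f = b0 \<otimes> f0" using q bf z by auto
        have bc: "b \<in> carrier G" and fc: "f \<in> carrier G" using b f Bc Fc by auto
        have 1: "b0 \<otimes> (inv b0 \<otimes> b) = b" using b0c bc by (simp add: m_assoc[symmetric])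
        have "inv (inv b0 \<otimes> b) \<otimes> f0 = inv b \<otimes> (b0 \<otimes> f0)" using b0c bc f0c by (simp add: inv_mult_group m_assoc)
        also have "\<dots> = inv b \<otimes> (b \<otimes> f)" using bfz by simp
        also have "\<dots> = f" using bc fc by (simp add: m_assoc[symmetric])
        finally show ?thesis using 1 bf by simp
      qed
    qed
    then show "card (?fib z) = card (B \<inter> F)" by (simp add: bij_betw_same_card)
  qed
  finally show ?thesis by (simp add: card_cartesian_product)
qed

lemma index_bound:
  assumes B: "subgroup B G" and F: "subgroup F G" and F': "subgroup F' G"
    and BF: "B \<subseteq> F" and F'F: "F' \<subseteq> F" and idx: "card F = p * card F'"
  shows "card B \<le> p * card (B \<inter> F')"
proof -
  have "B <#> F' \<subseteq> F" using BF F'F subgroup.m_closed[OF F] unfolding set_mult_def by auto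
  then have "card (B <#> F') \<le> card F" using card_mono sub_finite[OF F] by blast
  then have "card B * card F' \<le> p * card F' * card (B \<inter> F')"
    using prod_card[OF B F'] idx by (metis mult_le_mono1)
  then have "card B * card F' \<le> p * card (B \<inter> F') * card F'" by (simp add: mult_ac)
  then show ?thesis using sub_card_pos[OF F'] by simp
qed

lemma chain_exists:
  assumes D: "subgroup D G" and F: "subgroup F G" and DF: "D \<subseteq> F" and F1: "F \<subseteq> Om 1"
    and cD: "card D = p ^ d" and cF: "card F = p ^ (d + n)"
  shows "j \<le> n \<Longrightarrow> \<exists>F'. subgroup F' G \<and> D \<subseteq> F' \<and> F' \<subseteq> F \<and> card F' = p ^ (d + j)"
proof (induction j)
  case 0 then show ?case using D DF cD by auto
next
  case (Suc j)
  then obtain F' where F': "subgroup F' G" "D \<subseteq> F'" "F' \<subseteq> F" "card F' = p ^ (d + j)" by auto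
  have "card F' < card F" using F'(4) cF Suc.prems p_gt1 by simp
  then have "\<not> F \<subseteq> F'" using card_mono[OF sub_finite[OF F'(1)]] by (meson not_le)
  then obtain g where g: "g \<in> F" "g \<notin> F'" by blast
  have gc: "g \<in> carrier G" using g F subgroup.subset by blast
  have gp: "g [^] p \<in> F'" using g F1 subgroup.one_closed[OF F'(1)] by (auto simp: Omega_def)
  note E = ext_sub[OF F'(1) gc _ gp]
  have p0: "p > 0" using p_gt1 by simp
  have sub: "ext F' g p \<subseteq> F"
    unfolding ext_def using g F'(3) sub_pow_closed[OF F] subgroup.m_closed[OF F] by blast
  have "F' \<subset> ext F' g p" using E(2,3)[OF p0] g by blast
  then have "p * card F' \<le> card (ext F' g p)" using sub_strict F'(1) E(1)[OF p0] by blast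
  moreover have "card (ext F' g p) \<le> p * card F'" using E(4)[OF p0] .
  ultimately have "card (ext F' g p) = p ^ (d + Suc j)" using F'(4) by simp
  then show ?case using E(1,2)[OF p0] F'(2) sub by blast
qed

end

context pgrp begin

definition cos :: "'a set \<Rightarrow> 'a set \<Rightarrow> 'a set set" where
  "cos C F = {C #> b | b. b \<in> F}"

lemma card_cos:
  assumes C: "subgroup C G" and F: "subgroup F G" and CF: "C \<subseteq> F"
  shows "card (cos C F) * card C = card F"
proof -
  interpret Fg: group "G\<lparr>carrier := F\<rparr>" using subgroup.subgroup_is_group[OF F] is_group by blast
  have CFs: "subgroup C (G\<lparr>carrier := F\<rparr>)" using subgroup_incl C F CF by blast
  have "rcosets\<^bsub>G\<lparr>carrier := F\<rparr>\<^esub> C = cos C F"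
    unfolding RCOSETS_def cos_def r_coset_def by auto
  then show ?thesis using Fg.lagrange[OF CFs] by (simp add: order_def)
qed

definition Bs :: "'a set \<Rightarrow> 'a set \<Rightarrow> nat \<Rightarrow> 'a set set" where
  "Bs D F k = {B. subgroup B G \<and> D \<subseteq> B \<and> B \<subseteq> F \<and> card B = k}"

lemma Bs_finite: "finite (Bs D F k)"
proof -
  have "Bs D F k \<subseteq> Pow (carrier G)" unfolding Bs_def using subgroup.subset by blast
  then show ?thesis using finG finite_subset by blast
qed

lemma coset_fiber:
  assumes C: "subgroup C G" and F: "subgroup F G" and CF: "C \<subseteq> F"
  shows "card {B. subgroup B G \<and> B \<subseteq> F \<and> B \<inter> F' = C \<and> card B = p * card C} \<le> card (cos C F)"
proof -
  let ?Y = "{B. subgroup B G \<and> B \<subseteq> F \<and> B \<inter> F' = C \<and> card B = p * card C}"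
  let ?r = "\<lambda>B. SOME b. b \<in> B \<and> b \<notin> C"
  have cpos: "card C > 0" using sub_card_pos[OF C] .
  have rb: "?r B \<in> B \<and> ?r B \<notin> C" if B: "B \<in> ?Y" for B
  proof -
    have "card B \<noteq> card C" using B cpos p_gt1 by auto
    then have "B \<noteq> C" by blast
    moreover have "C \<subseteq> B" using B by blast
    ultimately have "\<exists>b. b \<in> B \<and> b \<notin> C" by blast
    then show ?thesis by (rule someI_ex)
  qed
  have "inj_on (\<lambda>B. C #> ?r B) ?Y"
  proof (rule inj_onI)
    fix B1 B2 assume B1: "B1 \<in> ?Y" and B2: "B2 \<in> ?Y" and eq: "C #> ?r B1 = C #> ?r B2"
    have s1: "subgroup B1 G" and s2: "subgroup B2 G" using B1 B2 by auto
    have CB1: "C \<subseteq> B1" and CB2: "C \<subseteq> B2" using B1 B2 by auto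
    have b2: "?r B2 \<in> B2" "?r B2 \<notin> C" using rb[OF B2] by auto
    have b1: "?r B1 \<in> B1" using rb[OF B1] by auto
    have b2c: "?r B2 \<in> carrier G" using b2 s2 subgroup.subset by blast
    have "\<one> \<otimes> ?r B2 \<in> C #> ?r B2" using subgroup.one_closed[OF C] unfolding r_coset_def by blast
    then have "?r B2 \<in> C #> ?r B2" using b2c by simp
    then have "?r B2 \<in> C #> ?r B1" using eq by simp
    then have "?r B2 \<in> B1" using CB1 b1 subgroup.m_closed[OF s1] unfolding r_coset_def by auto
    then have ss: "C \<subset> B1 \<inter> B2" using b2 CB1 CB2 by blast
    have s12: "subgroup (B1 \<inter> B2) G" using subgroups_Inter_pair s1 s2 by blast
    have "p * card C \<le> card (B1 \<inter> B2)" using sub_strict[OF C s12 ss] .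
    moreover have "card (B1 \<inter> B2) \<le> card B1" "card (B1 \<inter> B2) \<le> card B2"
      using sub_finite s1 s2 card_mono by (meson inf_le1 inf_le2)+
    ultimately have "card (B1 \<inter> B2) = card B1" "card (B1 \<inter> B2) = card B2" using B1 B2 by auto
    then have "B1 \<inter> B2 = B1" "B1 \<inter> B2 = B2" using card_subset_eq sub_finite s1 s2 by (meson inf_le1 inf_le2)+
    then show "B1 = B2" by simp
  qed
  moreover have "(\<lambda>B. C #> ?r B) ` ?Y \<subseteq> cos C F"
    unfolding cos_def using rb by blast
  moreover have "finite (cos C F)"
  proof -
    have "cos C F = (\<lambda>b. C #> b) ` F" unfolding cos_def by auto
    then show ?thesis using sub_finite[OF F] by simp
  qed
  ultimately show ?thesis using card_inj_on_le by blast
qed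


lemma flag_arith:
  assumes "u \<le> s"
  shows "(s choose Suc u) * p ^ (Suc u * (s - Suc u) + Suc u) + (s choose u) * p ^ (u * (s - u) + u) * p ^ (Suc s - u)
         \<le> (Suc s choose Suc u) * p ^ (Suc u * (Suc s - Suc u) + Suc u)"
proof -
  have "Suc u * (s - Suc u) \<le> Suc u * (Suc s - Suc u)" by (intro mult_le_mono2) simp
  then have e1: "p ^ (Suc u * (s - Suc u) + Suc u) \<le> p ^ (Suc u * (Suc s - Suc u) + Suc u)"
    using p_gt1 by (intro power_increasing) auto
  obtain w where w: "s = u + w" using assms le_Suc_ex by blast
  have "u * (s - u) + u + (Suc s - u) = Suc u * (Suc s - Suc u) + Suc u"
    unfolding w by (simp add: algebra_simps)
  then have e2: "p ^ (u * (s - u) + u) * p ^ (Suc s - u) = p ^ (Suc u * (Suc s - Suc u) + Suc u)"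
    by (metis power_add)
  have e3: "(s choose u) * p ^ (u * (s - u) + u) * p ^ (Suc s - u) = (s choose u) * p ^ (Suc u * (Suc s - Suc u) + Suc u)"
    using e2 by (simp only: mult.assoc)
  have "(s choose Suc u) * p ^ (Suc u * (s - Suc u) + Suc u) + (s choose u) * p ^ (u * (s - u) + u) * p ^ (Suc s - u)
        \<le> (s choose Suc u) * p ^ (Suc u * (Suc s - Suc u) + Suc u) + (s choose u) * p ^ (Suc u * (Suc s - Suc u) + Suc u)"
    unfolding e3 using e1 by (intro add_mono mult_le_mono2) auto
  also have "\<dots> = (Suc s choose Suc u) * p ^ (Suc u * (Suc s - Suc u) + Suc u)"
    by (simp only: binomial_Suc_Suc distrib_right add.commute)
  finally show ?thesis .
qed

lemma flag_count:
  assumes D: "subgroup D G" and cD: "card D = p ^ d"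
  shows "subgroup F G \<Longrightarrow> D \<subseteq> F \<Longrightarrow> F \<subseteq> Om 1 \<Longrightarrow> card F = p ^ (d + s) \<Longrightarrow>
         card (Bs D F (p ^ (d + t))) \<le> (s choose t) * p ^ (t * (s - t) + t)"
proof (induction s arbitrary: F t)
  case 0
  have FD: "F = D" using card_subset_eq[OF sub_finite[OF 0(1)] 0(2)] 0(4) cD by simp
  have sub1: "Bs D F (p ^ (d + t)) \<subseteq> {D}"
  proof
    fix B assume "B \<in> Bs D F (p ^ (d + t))"
    then have "D \<subseteq> B" "B \<subseteq> D" unfolding Bs_def FD by auto
    then show "B \<in> {D}" by blast
  qed
  show ?case
  proof (cases t)
    case 0
    have "card (Bs D F (p ^ (d + t))) \<le> card {D}" using sub1 by (rule card_mono[rotated]) simp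
    then show ?thesis using 0 by simp
  next
    case (Suc t')
    have "p ^ d < p ^ (d + t)" using Suc p_gt1 by (intro power_strict_increasing) auto
    then have "D \<notin> Bs D F (p ^ (d + t))" unfolding Bs_def using cD by auto
    then have "Bs D F (p ^ (d + t)) = {}" using sub1 by blast
    then show ?thesis by simp
  qed
next
  case (Suc s)
  note F = Suc.prems(1) and DF = Suc.prems(2) and F1 = Suc.prems(3) and cF = Suc.prems(4)
  obtain F' where F': "subgroup F' G" "D \<subseteq> F'" "F' \<subseteq> F" "card F' = p ^ (d + s)"
    using chain_exists[OF D F DF F1 cD cF, of s] by auto
  have idx: "card F = p * card F'" using cF F'(4) by simp
  have F'1: "F' \<subseteq> Om 1" using F'(3) F1 by blast
  show ?case
  proof (cases t)
    case 0
    have "Bs D F (p ^ (d + t)) \<subseteq> {D}"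
    proof
      fix B assume "B \<in> Bs D F (p ^ (d + t))"
      then have B: "subgroup B G" "D \<subseteq> B" "card D = card B" unfolding Bs_def using cD 0 by auto
      have "D = B" using card_subset_eq[OF sub_finite[OF B(1)] B(2) B(3)] .
      then show "B \<in> {D}" by simp
    qed
    then have "card (Bs D F (p ^ (d + t))) \<le> card {D}" by (rule card_mono[rotated]) simp
    then have "card (Bs D F (p ^ (d + t))) \<le> 1" by simp
    then show ?thesis using 0 by simp
  next
    case (Suc u)
    show ?thesis
    proof (cases "u \<le> s")
      case False
      have "Bs D F (p ^ (d + t)) = {}"
      proof -
        have lt: "p ^ (d + Suc s) < p ^ (d + t)" using False Suc p_gt1 by (intro power_strict_increasing) auto
        have "B \<notin> Bs D F (p ^ (d + t))" for B
        proof
          assume "B \<in> Bs D F (p ^ (d + t))"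
          then have BF: "B \<subseteq> F" and cB: "card B = p ^ (d + t)" unfolding Bs_def by auto
          have "card B \<le> card F" using card_mono[OF sub_finite[OF F] BF] .
          then show False using lt cF cB by linarith
        qed
        then show ?thesis by blast
      qed
      then show ?thesis by simp
    next
      case True
      let ?Y = "\<lambda>C. {B. subgroup B G \<and> B \<subseteq> F \<and> B \<inter> F' = C \<and> card B = p * card C}"
      have cover: "Bs D F (p ^ (d + t)) \<subseteq> Bs D F' (p ^ (d + t)) \<union> (\<Union>C\<in>Bs D F' (p ^ (d + u)). ?Y C)"
      proof
        fix B assume B: "B \<in> Bs D F (p ^ (d + t))"
        show "B \<in> Bs D F' (p ^ (d + t)) \<union> (\<Union>C\<in>Bs D F' (p ^ (d + u)). ?Y C)"
        proof (cases "B \<subseteq> F'")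
          case True then show ?thesis using B unfolding Bs_def by auto
        next
          case False
          have sB: "subgroup B G" "D \<subseteq> B" "B \<subseteq> F" "card B = p ^ (d + t)" using B unfolding Bs_def by auto
          let ?C = "B \<inter> F'"
          have sC: "subgroup ?C G" using subgroups_Inter_pair[OF sB(1) F'(1)] .
          have "card B \<le> p * card ?C" using index_bound[OF sB(1) F F'(1) sB(3) F'(3) idx] .
          have "?C \<subset> B" using False by blast
          then have "p * card ?C \<le> card B" using sub_strict[OF sC sB(1)] by simp
          moreover note \<open>card B \<le> p * card ?C\<close>
          ultimately have cC: "card B = p * card ?C" by simp
          then have "card ?C = p ^ (d + u)" using sB(4) Suc p_gt1 by simp
          then have "?C \<in> Bs D F' (p ^ (d + u))" unfolding Bs_def using sC sB(2) F'(2) by auto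
          moreover have "B \<in> ?Y ?C" using sB cC by auto
          ultimately show ?thesis by blast
        qed
      qed
      have fin: "finite (?Y C)" for C
      proof -
        have "?Y C \<subseteq> Pow (carrier G)"
        proof
          fix B assume "B \<in> ?Y C"
          then have "subgroup B G" by simp
          then show "B \<in> Pow (carrier G)" using subgroup.subset by simp
        qed
        then show ?thesis using finG finite_subset by blast
      qed
      have "card (Bs D F (p ^ (d + t))) \<le> card (Bs D F' (p ^ (d + t)) \<union> (\<Union>C\<in>Bs D F' (p ^ (d + u)). ?Y C))"
        using cover by (intro card_mono) (auto simp: Bs_finite fin)
      also have "\<dots> \<le> card (Bs D F' (p ^ (d + t))) + card (\<Union>C\<in>Bs D F' (p ^ (d + u)). ?Y C)"
        by (rule card_Un_le)
      also have "card (\<Union>C\<in>Bs D F' (p ^ (d + u)). ?Y C) \<le> (\<Sum>C\<in>Bs D F' (p ^ (d + u)). card (?Y C))"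
        by (rule card_UN_le[OF Bs_finite])
      also have "\<dots> \<le> (\<Sum>C\<in>Bs D F' (p ^ (d + u)). p ^ (Suc s - u))"
      proof (rule sum_mono)
        fix C assume C: "C \<in> Bs D F' (p ^ (d + u))"
        have sC: "subgroup C G" "C \<subseteq> F" "card C = p ^ (d + u)" using C F'(3) unfolding Bs_def by auto
        have Y1: "card (?Y C) \<le> card (cos C F)" using coset_fiber[OF sC(1) F sC(2)] .
        have "card (cos C F) * p ^ (d + u) = p ^ (d + Suc s)" using card_cos[OF sC(1) F sC(2)] sC(3) cF by simp
        moreover have "p ^ (d + Suc s) = p ^ (Suc s - u) * p ^ (d + u)"
        proof -
          have "d + Suc s = (Suc s - u) + (d + u)" using True by simp
          then show ?thesis by (simp only: power_add)
        qed
        ultimately have "card (cos C F) * p ^ (d + u) = p ^ (Suc s - u) * p ^ (d + u)" by simp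
        then have "card (cos C F) = p ^ (Suc s - u)" using p_gt1 by simp
        then show "card (?Y C) \<le> p ^ (Suc s - u)" using Y1 by simp
      qed
      also have "\<dots> = card (Bs D F' (p ^ (d + u))) * p ^ (Suc s - u)" by simp
      finally have "card (Bs D F (p ^ (d + t))) \<le> card (Bs D F' (p ^ (d + t))) + card (Bs D F' (p ^ (d + u))) * p ^ (Suc s - u)"
        by simp
      also have "\<dots> \<le> (s choose t) * p ^ (t * (s - t) + t) + (s choose u) * p ^ (u * (s - u) + u) * p ^ (Suc s - u)"
        using Suc.IH[OF F'(1,2) F'1 F'(4), of t] Suc.IH[OF F'(1,2) F'1 F'(4), of u]
        by (intro add_mono mult_le_mono1)
      also have "\<dots> \<le> (Suc s choose t) * p ^ (t * (Suc s - t) + t)"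
        using flag_arith[OF True] Suc by simp
      finally show ?thesis .
    qed
  qed
qed

end

context pgrp begin

lemma frattini:
  assumes K: "subgroup K G" and Q: "subgroup Q G" and QK: "Q \<subseteq> K"
    and gen: "K \<subseteq> generate G (pw 1 K \<union> Q)"
  shows "K \<subseteq> Q"
proof -
  have Kc: "K \<subseteq> carrier G" and Qc: "Q \<subseteq> carrier G" using K Q subgroup.subset by auto
  let ?Z = "{q \<otimes> z [^] p | q z. q \<in> Q \<and> z \<in> K}"
  have Zs: "subgroup ?Z G"
  proof (rule subgroupI)
    show "?Z \<subseteq> carrier G" using Kc Qc by auto
    have "\<one> \<otimes> \<one> [^] p \<in> ?Z" using subgroup.one_closed[OF Q] subgroup.one_closed[OF K] by blast
    then show "?Z \<noteq> {}" by blast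
    show "inv a \<in> ?Z" if a: "a \<in> ?Z" for a
    proof -
      obtain q z where qz: "a = q \<otimes> z [^] p" "q \<in> Q" "z \<in> K" using a by blast
      have qc: "q \<in> carrier G" and zc: "z \<in> carrier G" using qz Kc Qc by auto
      have "inv a = inv q \<otimes> (inv z) [^] p" using qz qc zc by (simp add: inv_mult_group nat_pow_inv m_comm)
      moreover have "inv q \<in> Q" using qz subgroup.m_inv_closed[OF Q] by blast
      moreover have "inv z \<in> K" using qz subgroup.m_inv_closed[OF K] by blast
      ultimately show ?thesis by blast
    qed
    show "a \<otimes> b \<in> ?Z" if a: "a \<in> ?Z" and b: "b \<in> ?Z" for a b
    proof -
      obtain q z where qz: "a = q \<otimes> z [^] p" "q \<in> Q" "z \<in> K" using a by blast
      obtain q' z' where qz': "b = q' \<otimes> z' [^] p" "q' \<in> Q" "z' \<in> K" using b by blast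
      have c: "q \<in> carrier G" "z \<in> carrier G" "q' \<in> carrier G" "z' \<in> carrier G" using qz qz' Kc Qc by auto
      have "a \<otimes> b = (q \<otimes> q') \<otimes> (z \<otimes> z') [^] p" using qz qz' c by (simp add: nat_pow_distrib m_ac)
      moreover have "q \<otimes> q' \<in> Q" using qz qz' subgroup.m_closed[OF Q] by blast
      moreover have "z \<otimes> z' \<in> K" using qz qz' subgroup.m_closed[OF K] by blast
      ultimately show ?thesis by blast
    qed
  qed
  have "pw 1 K \<union> Q \<subseteq> ?Z"
  proof
    fix x assume "x \<in> pw 1 K \<union> Q"
    then show "x \<in> ?Z"
    proof
      assume "x \<in> pw 1 K"
      then obtain z where z: "z \<in> K" "x = z [^] p" unfolding pw_def by auto
      then have "x = \<one> \<otimes> z [^] p" using Kc by auto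
      then show "x \<in> ?Z" using z subgroup.one_closed[OF Q] by blast
    next
      assume x: "x \<in> Q"
      then have "x = x \<otimes> \<one> [^] p" using Qc by auto
      then show "x \<in> ?Z" using x subgroup.one_closed[OF K] by blast
    qed
  qed
  then have KZ: "K \<subseteq> ?Z" using gen generate_subgroup_incl[OF _ Zs] by blast
  have step: "\<forall>x\<in>K. \<exists>q\<in>Q. \<exists>z\<in>K. x = q \<otimes> z [^] (p ^ j)" for j
  proof (induction j)
    case 0
    show ?case
    proof
      fix x assume x: "x \<in> K"
      then have "x = \<one> \<otimes> x [^] (p ^ 0)" using Kc by auto
      then show "\<exists>q\<in>Q. \<exists>z\<in>K. x = q \<otimes> z [^] (p ^ 0)" using x subgroup.one_closed[OF Q] by blast
    qed
  next
    case (Suc j)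
    show ?case
    proof
      fix x assume x: "x \<in> K"
      then obtain q z where qz: "q \<in> Q" "z \<in> K" "x = q \<otimes> z [^] (p ^ j)" using Suc by blast
      obtain q' w where qw: "z = q' \<otimes> w [^] p" "q' \<in> Q" "w \<in> K" using KZ qz(2) by blast
      have c: "q \<in> carrier G" "q' \<in> carrier G" "w \<in> carrier G" using qz qw Kc Qc by auto
      have "z [^] (p ^ j) = q' [^] (p ^ j) \<otimes> w [^] (p ^ Suc j)"
        using qw c by (simp add: nat_pow_distrib nat_pow_pow mult.commute)
      then have "x = (q \<otimes> q' [^] (p ^ j)) \<otimes> w [^] (p ^ Suc j)" using qz c by (simp add: m_assoc)
      moreover have "q \<otimes> q' [^] (p ^ j) \<in> Q" using qz qw sub_pow_closed[OF Q] subgroup.m_closed[OF Q] by blast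
      ultimately show "\<exists>q\<in>Q. \<exists>z\<in>K. x = q \<otimes> z [^] (p ^ Suc j)" using qw by blast
    qed
  qed
  show "K \<subseteq> Q"
  proof
    fix x assume x: "x \<in> K"
    then obtain q z where qz: "q \<in> Q" "z \<in> K" "x = q \<otimes> z [^] (p ^ \<alpha>)" using step[of \<alpha>] by blast
    have "z [^] (p ^ \<alpha>) = \<one>" using pow_alpha qz(2) Kc by blast
    then have "x = q" using qz Qc by auto
    then show "x \<in> Q" using qz by simp
  qed
qed

lemma gen_exists:
  assumes K: "subgroup K G"
  shows "\<exists>ks. set ks \<subseteq> K \<and> generate G (set ks) = K \<and> p ^ length ks \<le> card (K \<inter> Om 1)"
proof -
  have Kc: "K \<subseteq> carrier G" using K subgroup.subset by auto
  let ?W = "\<lambda>ks. generate G (pw 1 K \<union> set ks)"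
  have pK: "subgroup (pw 1 K) G" using pw_sub[OF K] .
  have pKK: "pw 1 K \<subseteq> K" using pw_subset[OF K] .
  have Wsub: "set ks \<subseteq> K \<Longrightarrow> subgroup (?W ks) G" for ks
    using pKK Kc by (intro generate_is_subgroup) auto
  have WK: "set ks \<subseteq> K \<Longrightarrow> ?W ks \<subseteq> K" for ks
    using pKK generate_subgroup_incl[OF _ K] by (metis Un_subset_iff)
  have greedy: "\<forall>ks. set ks \<subseteq> K \<and> p ^ length ks * card (pw 1 K) \<le> card (?W ks) \<and> card K - card (?W ks) \<le> m
      \<longrightarrow> (\<exists>ks'. set ks' \<subseteq> K \<and> ?W ks' = K \<and> p ^ length ks' * card (pw 1 K) \<le> card K)" for m
  proof (induction m)
    case 0
    show ?case
    proof (intro allI impI)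
      fix ks assume a: "set ks \<subseteq> K \<and> p ^ length ks * card (pw 1 K) \<le> card (?W ks) \<and> card K - card (?W ks) \<le> 0"
      then have "card K \<le> card (?W ks)" by simp
      then have "?W ks = K" using WK[of ks] a card_subset_eq[OF sub_finite[OF K]] card_mono[OF sub_finite[OF K]]
        by (meson le_antisym)
      then show "\<exists>ks'. set ks' \<subseteq> K \<and> ?W ks' = K \<and> p ^ length ks' * card (pw 1 K) \<le> card K"
        using a by metis
    qed
  next
    case (Suc m)
    show ?case
    proof (intro allI impI)
      fix ks assume a: "set ks \<subseteq> K \<and> p ^ length ks * card (pw 1 K) \<le> card (?W ks) \<and> card K - card (?W ks) \<le> Suc m"
      show "\<exists>ks'. set ks' \<subseteq> K \<and> ?W ks' = K \<and> p ^ length ks' * card (pw 1 K) \<le> card K"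
      proof (cases "?W ks = K")
        case True then show ?thesis using a by metis
      next
        case False
        then obtain g where g: "g \<in> K" "g \<notin> ?W ks" using WK[of ks] a by blast
        let ?ks = "ks @ [g]"
        have s1: "set ?ks \<subseteq> K" using a g by auto
        have "?W ks \<subseteq> ?W ?ks" by (intro mono_generate) auto
        moreover have "g \<in> ?W ?ks" using generate.incl[of g "pw 1 K \<union> set ?ks" G] by auto
        ultimately have ss: "?W ks \<subset> ?W ?ks" using g by blast
        have "p * card (?W ks) \<le> card (?W ?ks)" using sub_strict[OF Wsub Wsub ss] a s1 by blast
        then have c1: "p ^ length ?ks * card (pw 1 K) \<le> card (?W ?ks)" using a
          by (simp add: mult.assoc) (meson le_trans mult_le_mono2)
        have "card (?W ks) < card (?W ?ks)" using psubset_card_mono[OF sub_finite[OF Wsub[OF s1]] ss] .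
        moreover have "card (?W ?ks) \<le> card K" using card_mono[OF sub_finite[OF K] WK[OF s1]] .
        ultimately have "card K - card (?W ?ks) \<le> m" using a by linarith
        then show ?thesis using Suc.IH s1 c1 by blast
      qed
    qed
  qed
  have W0: "?W [] = pw 1 K"
    using generate_subgroup_incl[OF _ pK, of "pw 1 K"] generate.incl[of _ "pw 1 K" G] by auto
  obtain ks where ks: "set ks \<subseteq> K" "?W ks = K" "p ^ length ks * card (pw 1 K) \<le> card K"
    using greedy[of "card K", rule_format, of "[]"] W0 by auto
  let ?Q = "generate G (set ks)"
  have Q: "subgroup ?Q G" using ks(1) Kc by (intro generate_is_subgroup) auto
  have QK: "?Q \<subseteq> K" using generate_subgroup_incl[OF ks(1) K] .
  have "?W ks \<subseteq> generate G (pw 1 K \<union> ?Q)"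
    by (intro mono_generate) (auto intro: generate.incl)
  then have "K \<subseteq> ?Q" using frattini[OF K Q QK] ks(2) by simp
  then have "?Q = K" using QK by blast
  moreover have "card K = card (K \<inter> Om 1) * card (pw 1 K)" using ker_img[OF K] .
  then have "p ^ length ks \<le> card (K \<inter> Om 1)" using ks(3) sub_card_pos[OF pK] by simp
  ultimately show ?thesis using ks(1) by blast
qed

end

context pgrp begin

definition lift :: "'a set \<Rightarrow> 'a \<Rightarrow> 'a" where
  "lift S k = (SOME x. x \<in> S \<and> x [^] p = k)"

lemma lift_prop: "k \<in> pw 1 S \<Longrightarrow> lift S k \<in> S \<and> lift S k [^] p = k"
  unfolding lift_def pw_def by (rule someI_ex) auto

definition Cset :: "'a set \<Rightarrow> 'a set \<Rightarrow> 'a \<Rightarrow> 'a set" where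
  "Cset S H k = {y \<in> S \<inter> Om 1. lift S k \<otimes> y \<in> H}"

lemma E_sub: "subgroup S G \<Longrightarrow> subgroup (S \<inter> Om 1) G"
  using subgroups_Inter_pair Om_sub by blast

lemma Cset_coset:
  assumes S: "subgroup S G" and H: "subgroup H G" and HS: "H \<subseteq> S" and k: "k \<in> pw 1 H"
  shows "\<exists>y0\<in>S \<inter> Om 1. Cset S H k = (H \<inter> (S \<inter> Om 1)) #> y0"
proof -
  let ?E = "S \<inter> Om 1"
  have Sc: "S \<subseteq> carrier G" using S subgroup.subset by auto
  have Hc: "H \<subseteq> carrier G" using H subgroup.subset by auto
  have E: "subgroup ?E G" using E_sub[OF S] .
  have kS: "k \<in> pw 1 S" using k pw_mono[OF HS] by blast
  obtain h where h: "h \<in> H" "k = h [^] p" using k unfolding pw_def by auto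
  define l where "l = lift S k"
  have l: "l \<in> S" "l [^] p = k" using lift_prop[OF kS] l_def by auto
  have lc: "l \<in> carrier G" and hc: "h \<in> carrier G" using l h Sc Hc by auto
  define y0 where "y0 = inv l \<otimes> h"
  have y0c: "y0 \<in> carrier G" using lc hc y0_def by simp
  have "y0 \<in> S" using y0_def l h HS subgroup.m_closed[OF S] subgroup.m_inv_closed[OF S] by blast
  moreover have "y0 [^] p = \<one>" unfolding y0_def using lc hc l h
    by (simp add: nat_pow_distrib nat_pow_inv)
  ultimately have y0E: "y0 \<in> ?E" using y0c by (simp add: Omega_def)
  have ly0: "l \<otimes> y0 = h" unfolding y0_def using lc hc by (simp add: m_assoc[symmetric])
  have "Cset S H k = (H \<inter> ?E) #> y0"
  proof
    show "Cset S H k \<subseteq> (H \<inter> ?E) #> y0"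
    proof
      fix y assume y: "y \<in> Cset S H k"
      then have yE: "y \<in> ?E" and lyH: "l \<otimes> y \<in> H" unfolding Cset_def l_def by auto
      have yc: "y \<in> carrier G" using yE Sc by auto
      let ?a = "y \<otimes> inv y0"
      have "?a = (l \<otimes> y) \<otimes> inv h" unfolding y0_def using yc lc hc
        by (simp add: inv_mult_group m_ac)
      then have "?a \<in> H" using lyH h subgroup.m_closed[OF H] subgroup.m_inv_closed[OF H] by simp
      moreover have "?a \<in> ?E" using yE y0E subgroup.m_closed[OF E] subgroup.m_inv_closed[OF E] by blast
      moreover have "y = ?a \<otimes> y0" using yc y0c by (simp add: m_assoc)
      ultimately show "y \<in> (H \<inter> ?E) #> y0" unfolding r_coset_def by blast
    qed
    show "(H \<inter> ?E) #> y0 \<subseteq> Cset S H k"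
    proof
      fix y assume "y \<in> (H \<inter> ?E) #> y0"
      then obtain a where a: "a \<in> H" "a \<in> ?E" "y = a \<otimes> y0" unfolding r_coset_def by blast
      have ac: "a \<in> carrier G" using a Hc by auto
      have "y \<in> ?E" using a y0E subgroup.m_closed[OF E] by blast
      moreover have "l \<otimes> y = a \<otimes> h" using a(3) ly0 ac lc y0c by (metis m_assoc m_comm)
      then have "l \<otimes> y \<in> H" using a h subgroup.m_closed[OF H] by simp
      ultimately show "y \<in> Cset S H k" unfolding Cset_def l_def by blast
    qed
  qed
  then show ?thesis using y0E by blast
qed

lemma fiber_inj:
  assumes S: "subgroup S G" and K: "subgroup K G"
    and ks: "set ks \<subseteq> K" "generate G (set ks) = K"
    and H1: "subgroup H1 G" "H1 \<subseteq> S" "pw 1 H1 = K"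
    and H2: "subgroup H2 G" "H2 \<subseteq> S" "pw 1 H2 = K"
    and eqA: "H1 \<inter> (S \<inter> Om 1) = H2 \<inter> (S \<inter> Om 1)"
    and eqC: "\<forall>k\<in>set ks. Cset S H1 k = Cset S H2 k"
  shows "H1 \<subseteq> H2"
proof -
  have Sc: "S \<subseteq> carrier G" using S subgroup.subset by auto
  have H1c: "H1 \<subseteq> carrier G" using H1 subgroup.subset by auto
  have H2c: "H2 \<subseteq> carrier G" using H2 subgroup.subset by auto
  let ?Q = "{k. \<exists>h. h \<in> H1 \<and> h \<in> H2 \<and> h [^] p = k}"
  have Qs: "subgroup ?Q G"
  proof (rule subgroupI)
    show "?Q \<subseteq> carrier G" using H1c by auto
    have "\<one> \<in> H1" "\<one> \<in> H2" using subgroup.one_closed H1(1) H2(1) by auto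
    then have "\<one> [^] p \<in> ?Q" by blast
    then show "?Q \<noteq> {}" by blast
    show "inv a \<in> ?Q" if a: "a \<in> ?Q" for a
    proof -
      obtain h where h: "h \<in> H1" "h \<in> H2" "h [^] p = a" using a by blast
      have "inv h \<in> H1" "inv h \<in> H2" using h subgroup.m_inv_closed H1(1) H2(1) by auto
      moreover have "(inv h) [^] p = inv a" using h subsetD[OF H1c] by (simp add: nat_pow_inv)
      ultimately show ?thesis by blast
    qed
    show "a \<otimes> b \<in> ?Q" if a: "a \<in> ?Q" and b: "b \<in> ?Q" for a b
    proof -
      obtain h where h: "h \<in> H1" "h \<in> H2" "h [^] p = a" using a by blast
      obtain h' where h': "h' \<in> H1" "h' \<in> H2" "h' [^] p = b" using b by blast
      have "h \<otimes> h' \<in> H1" "h \<otimes> h' \<in> H2" using h h' subgroup.m_closed H1(1) H2(1) by auto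
      moreover have "(h \<otimes> h') [^] p = a \<otimes> b" using h h' subsetD[OF H1c] by (simp add: nat_pow_distrib)
      ultimately show ?thesis by blast
    qed
  qed
  have "set ks \<subseteq> ?Q"
  proof
    fix k assume k: "k \<in> set ks"
    then have kK: "k \<in> pw 1 H1" using ks H1 by auto
    obtain y0 where y0: "y0 \<in> S \<inter> Om 1" "Cset S H1 k = (H1 \<inter> (S \<inter> Om 1)) #> y0"
      using Cset_coset[OF S H1(1,2) kK] by blast
    have "y0 \<in> Cset S H1 k" unfolding y0(2) r_coset_def
      using subgroup.one_closed[OF H1(1)] Om_sub subgroup.one_closed[OF S] y0(1) Sc
      by (auto intro!: bexI[of _ \<one>] simp: subgroup.one_closed[OF Om_sub])
    then have "y0 \<in> Cset S H2 k" using eqC k by auto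
    then have in1: "lift S k \<otimes> y0 \<in> H1" and in2: "lift S k \<otimes> y0 \<in> H2"
      using \<open>y0 \<in> Cset S H1 k\<close> unfolding Cset_def by auto
    have kS: "k \<in> pw 1 S" using kK pw_mono[OF H1(2)] by blast
    have l: "lift S k \<in> S" "lift S k [^] p = k" using lift_prop[OF kS] by auto
    have y0c: "y0 \<in> carrier G" "y0 [^] p = \<one>" using y0(1) by (auto simp: Omega_def)
    have "lift S k \<in> carrier G" using l Sc by auto
    then have "(lift S k \<otimes> y0) [^] p = lift S k [^] p" using y0c by (simp add: nat_pow_distrib)
    then have "(lift S k \<otimes> y0) [^] p = k" using l by simp
    then show "k \<in> ?Q" using in1 in2 by blast
  qed
  then have KQ: "K \<subseteq> ?Q" using generate_subgroup_incl[OF _ Qs] ks(2) by blast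
  show "H1 \<subseteq> H2"
  proof
    fix x assume x: "x \<in> H1"
    have xc: "x \<in> carrier G" using x H1c by auto
    have "x [^] p \<in> K" using x H1(3) unfolding pw_def by auto
    then obtain h where h: "h \<in> H1" "h \<in> H2" "h [^] p = x [^] p" using KQ by blast
    have hc: "h \<in> carrier G" using h H1c by auto
    let ?a = "x \<otimes> inv h"
    have aH1: "?a \<in> H1" using x h subgroup.m_closed[OF H1(1)] subgroup.m_inv_closed[OF H1(1)] by blast
    have "?a [^] p = \<one>" using h xc hc by (simp add: nat_pow_distrib nat_pow_inv)
    then have "?a \<in> H1 \<inter> (S \<inter> Om 1)" using aH1 H1(2) xc hc by (auto simp: Omega_def)
    then have "?a \<in> H2" using eqA by blast
    then have "?a \<otimes> h \<in> H2" using h subgroup.m_closed[OF H2(1)] by blast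
    moreover have "?a \<otimes> h = x" using xc hc by (simp add: m_assoc)
    ultimately show "x \<in> H2" by simp
  qed
qed

end

context pgrp begin

lemma cos_finite: "subgroup E G \<Longrightarrow> finite (cos A E)"
proof -
  assume E: "subgroup E G"
  have "cos A E = (\<lambda>b. A #> b) ` E" unfolding cos_def by auto
  then show ?thesis using sub_finite[OF E] by simp
qed

lemma fiber_bound:
  assumes S: "subgroup S G" and K: "subgroup K G" and KS: "K \<subseteq> pw 1 S"
    and ks: "set ks \<subseteq> K" "generate G (set ks) = K"
  shows "card {H. subgroup H G \<and> H \<subseteq> S \<and> pw 1 H = K}
    \<le> (\<Sum>A\<in>{A. subgroup A G \<and> K \<inter> Om 1 \<subseteq> A \<and> A \<subseteq> S \<inter> Om 1}. card (cos A (S \<inter> Om 1)) ^ length ks)"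
proof -
  let ?E = "S \<inter> Om 1"
  let ?F = "{H. subgroup H G \<and> H \<subseteq> S \<and> pw 1 H = K}"
  let ?As = "{A. subgroup A G \<and> K \<inter> Om 1 \<subseteq> A \<and> A \<subseteq> ?E}"
  let ?L = "\<lambda>A. {cs. set cs \<subseteq> cos A ?E \<and> length cs = length ks}"
  let ?enc = "\<lambda>H. (H \<inter> ?E, map (Cset S H) ks)"
  have E: "subgroup ?E G" using E_sub[OF S] .
  have pS: "pw 1 S \<subseteq> S" using pw_subset[OF S] .
  have inj: "inj_on ?enc ?F"
  proof (rule inj_onI)
    fix H1 H2 assume H1: "H1 \<in> ?F" and H2: "H2 \<in> ?F" and eq: "?enc H1 = ?enc H2"
    have eqA: "H1 \<inter> ?E = H2 \<inter> ?E" using eq by simp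
    have "map (Cset S H1) ks = map (Cset S H2) ks" using eq by simp
    then have eqC: "\<forall>k\<in>set ks. Cset S H1 k = Cset S H2 k" by simp
    have h1: "subgroup H1 G" "H1 \<subseteq> S" "pw 1 H1 = K" using H1 by auto
    have h2: "subgroup H2 G" "H2 \<subseteq> S" "pw 1 H2 = K" using H2 by auto
    show "H1 = H2"
      using fiber_inj[OF S K ks h1 h2 eqA eqC] fiber_inj[OF S K ks h2 h1 eqA[symmetric]] eqC
      by (metis subset_antisym)
  qed
  have img: "?enc ` ?F \<subseteq> Sigma ?As ?L"
  proof
    fix q assume "q \<in> ?enc ` ?F"
    then obtain H where H: "H \<in> ?F" "q = ?enc H" by blast
    have h: "subgroup H G" "H \<subseteq> S" "pw 1 H = K" using H by auto
    have "subgroup (H \<inter> ?E) G" using subgroups_Inter_pair[OF h(1) E] .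
    moreover have "K \<inter> Om 1 \<subseteq> H \<inter> ?E" using pw_subset[OF h(1)] h(3) KS pS by blast
    ultimately have A: "H \<inter> ?E \<in> ?As" by blast
    have "set (map (Cset S H) ks) \<subseteq> cos (H \<inter> ?E) ?E"
    proof
      fix c assume "c \<in> set (map (Cset S H) ks)"
      then obtain k where k: "k \<in> set ks" "c = Cset S H k" by auto
      have "k \<in> pw 1 H" using k ks h by auto
      then obtain y0 where "y0 \<in> ?E" "Cset S H k = (H \<inter> ?E) #> y0"
        using Cset_coset[OF S h(1,2)] by blast
      then show "c \<in> cos (H \<inter> ?E) ?E" unfolding cos_def using k by blast
    qed
    then have "map (Cset S H) ks \<in> ?L (H \<inter> ?E)" by simp
    then show "q \<in> Sigma ?As ?L" using A H(2) by simp
  qed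
  have finAs: "finite ?As"
  proof -
    have "?As \<subseteq> Pow (carrier G)"
    proof
      fix A assume "A \<in> ?As" then have "subgroup A G" by simp
      then show "A \<in> Pow (carrier G)" using subgroup.subset by simp
    qed
    then show ?thesis using finG finite_subset by blast
  qed
  have finL: "finite (?L A)" for A
    using finite_lists_length_eq[OF cos_finite[OF E]] by simp
  have "card ?F \<le> card (Sigma ?As ?L)"
    using card_inj_on_le[OF inj img] finAs finL by (simp add: finite_SigmaI)
  also have "\<dots> = (\<Sum>A\<in>?As. card (?L A))" using finAs finL by (simp add: card_SigmaI)
  also have "\<dots> = (\<Sum>A\<in>?As. card (cos A ?E) ^ length ks)"
    using card_lists_length_eq[OF cos_finite[OF E]] by simp
  finally show ?thesis .
qed

lemma sum_bound:
  assumes D: "subgroup D G" and E: "subgroup E G" and DE: "D \<subseteq> E" and E1: "E \<subseteq> Om 1"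
    and cD: "card D = p ^ d" and cE: "card E = p ^ (d + n)" and md: "m \<le> d"
  shows "(\<Sum>A\<in>{A. subgroup A G \<and> D \<subseteq> A \<and> A \<subseteq> E}. card (cos A E) ^ m)
    \<le> (\<Sum>t\<le>n. (n choose t) * p ^ (t * (n - t) + t) * p ^ ((n - t) * d))"
proof -
  let ?As = "{A. subgroup A G \<and> D \<subseteq> A \<and> A \<subseteq> E}"
  have eq: "?As = (\<Union>t\<in>{..n}. Bs D E (p ^ (d + t)))"
  proof
    show "?As \<subseteq> (\<Union>t\<in>{..n}. Bs D E (p ^ (d + t)))"
    proof
      fix A assume A: "A \<in> ?As"
      then have sA: "subgroup A G" "D \<subseteq> A" "A \<subseteq> E" by auto
      obtain k where k: "card A = p ^ k * card D" using sub_dvd_pow[OF D sA(1) sA(2)] by blast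
      have "card A \<le> card E" using card_mono[OF sub_finite[OF E] sA(3)] .
      then have "p ^ (k + d) \<le> p ^ (d + n)" using k cD cE by (simp add: power_add)
      then have "k + d \<le> d + n" using p_gt1 power_le_imp_le_exp by blast
      then have "k \<le> n" by simp
      moreover have "card A = p ^ (d + k)" using k cD by (simp add: power_add mult.commute)
      ultimately show "A \<in> (\<Union>t\<in>{..n}. Bs D E (p ^ (d + t)))" unfolding Bs_def using sA by blast
    qed
    show "(\<Union>t\<in>{..n}. Bs D E (p ^ (d + t))) \<subseteq> ?As" unfolding Bs_def by blast
  qed
  have disj: "Bs D E (p ^ (d + t1)) \<inter> Bs D E (p ^ (d + t2)) = {}" if "t1 \<noteq> t2" for t1 t2
  proof -
    have "p ^ (d + t1) \<noteq> p ^ (d + t2)" using that p_gt1 by (simp add: power_inject_exp)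
    then show ?thesis unfolding Bs_def by auto
  qed
  have "(\<Sum>A\<in>?As. card (cos A E) ^ m) = (\<Sum>t\<le>n. \<Sum>A\<in>Bs D E (p ^ (d + t)). card (cos A E) ^ m)"
    unfolding eq by (rule sum.UNION_disjoint) (auto simp: Bs_finite disj)
  also have "\<dots> \<le> (\<Sum>t\<le>n. (n choose t) * p ^ (t * (n - t) + t) * p ^ ((n - t) * d))"
  proof (rule sum_mono)
    fix t assume t: "t \<in> {..n}"
    have each: "card (cos A E) ^ m \<le> p ^ ((n - t) * d)" if A: "A \<in> Bs D E (p ^ (d + t))" for A
    proof -
      have sA: "subgroup A G" "A \<subseteq> E" "card A = p ^ (d + t)" using A unfolding Bs_def by auto
      have "card (cos A E) * p ^ (d + t) = p ^ (d + n)" using card_cos[OF sA(1) E sA(2)] sA(3) cE by simp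
      moreover have "p ^ (d + n) = p ^ (n - t) * p ^ (d + t)"
      proof -
        have "d + n = (n - t) + (d + t)" using t by simp
        then show ?thesis by (simp only: power_add)
      qed
      ultimately have "card (cos A E) = p ^ (n - t)" using p_gt1 by simp
      then have "card (cos A E) ^ m = p ^ ((n - t) * m)" by (simp add: power_mult)
      also have "\<dots> \<le> p ^ ((n - t) * d)" using p_gt1 md by (intro power_increasing) auto
      finally show ?thesis .
    qed
    have "(\<Sum>A\<in>Bs D E (p ^ (d + t)). card (cos A E) ^ m) \<le> (\<Sum>A\<in>Bs D E (p ^ (d + t)). p ^ ((n - t) * d))"
      by (rule sum_mono) (rule each)
    also have "\<dots> = card (Bs D E (p ^ (d + t))) * p ^ ((n - t) * d)" by simp
    also have "\<dots> \<le> (n choose t) * p ^ (t * (n - t) + t) * p ^ ((n - t) * d)"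
      using flag_count[OF D cD E DE E1 cE, of t] by (intro mult_le_mono1)
    finally show "(\<Sum>A\<in>Bs D E (p ^ (d + t)). card (cos A E) ^ m) \<le> (n choose t) * p ^ (t * (n - t) + t) * p ^ ((n - t) * d)" .
  qed
  finally show ?thesis .
qed

end

lemma amgm4: fixes x y :: real shows "4 * (x * y) \<le> (x + y) ^ 2"
proof -
  have "(x + y) ^ 2 - 4 * (x * y) = (x - y) ^ 2" by (simp add: power2_eq_square algebra_simps)
  then show ?thesis using zero_le_power2[of "x - y"] by linarith
qed

lemma arith_real:
  fixes t n d :: nat
  assumes "t \<le> n"
  shows "real (t * (n - t) + t + (n - t) * d) \<le> real (d + n) ^ 2 / 4 + real (d + n)"
proof -
  obtain w where w: "n = t + w" using assms le_Suc_ex by blast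
  have eq: "real (t * (n - t) + t + (n - t) * d) = real w * (real t + real d) + real t"
    unfolding w by (simp add: algebra_simps)
  have "real (d + n) = real w + (real t + real d)" unfolding w by simp
  then have "4 * (real w * (real t + real d)) \<le> real (d + n) ^ 2" using amgm4[of "real w" "real t + real d"] by (simp only:)
  moreover have "real t \<le> real (d + n)" using assms by simp
  ultimately show ?thesis unfolding eq by linarith
qed

context pgrp begin

definition SubIn :: "'a set \<Rightarrow> 'a set set" where
  "SubIn S = {H. subgroup H G \<and> H \<subseteq> S}"

lemma SubIn_finite: "finite (SubIn S)"
proof -
  have "SubIn S \<subseteq> Pow (carrier G)"
  proof
    fix H assume "H \<in> SubIn S" then have "subgroup H G" unfolding SubIn_def by simp
    then show "H \<in> Pow (carrier G)" using subgroup.subset by simp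
  qed
  then show ?thesis using finG finite_subset by blast
qed

lemma fib_bound:
  assumes S: "subgroup S G" and cE: "card (S \<inter> Om 1) = p ^ n1"
    and K: "subgroup K G" and KS: "K \<subseteq> pw 1 S"
  shows "real (card {H. subgroup H G \<and> H \<subseteq> S \<and> pw 1 H = K}) \<le> real p powr (real n1 ^ 2 / 4 + 2 * real n1)"
proof -
  obtain ks where ks: "set ks \<subseteq> K" "generate G (set ks) = K" "p ^ length ks \<le> card (K \<inter> Om 1)"
    using gen_exists[OF K] by blast
  have D: "subgroup (K \<inter> Om 1) G" using subgroups_Inter_pair[OF K Om_sub] .
  have E: "subgroup (S \<inter> Om 1) G" using E_sub[OF S] .
  obtain d where d: "card (K \<inter> Om 1) = p ^ d" using sub_card_pow[OF D] by blast
  have md: "length ks \<le> d" using ks(3) d p_gt1 power_le_imp_le_exp by metis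
  have DE: "K \<inter> Om 1 \<subseteq> S \<inter> Om 1" using KS pw_subset[OF S] by blast
  have "p ^ d \<le> p ^ n1" using card_mono[OF sub_finite[OF E] DE] d cE by simp
  then have dn: "d \<le> n1" using p_gt1 power_le_imp_le_exp by blast
  define n where "n = n1 - d"
  have n1: "n1 = d + n" using dn n_def by simp
  have cE': "card (S \<inter> Om 1) = p ^ (d + n)" using cE n1 by simp
  have "card {H. subgroup H G \<and> H \<subseteq> S \<and> pw 1 H = K}
    \<le> (\<Sum>A\<in>{A. subgroup A G \<and> K \<inter> Om 1 \<subseteq> A \<and> A \<subseteq> S \<inter> Om 1}. card (cos A (S \<inter> Om 1)) ^ length ks)"
    using fiber_bound[OF S K KS ks(1,2)] .
  also have "\<dots> \<le> (\<Sum>t\<le>n. (n choose t) * p ^ (t * (n - t) + t) * p ^ ((n - t) * d))"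
    using sum_bound[OF D E DE _ d cE' md] by blast
  also have "\<dots> = (\<Sum>t\<le>n. (n choose t) * p ^ (t * (n - t) + t + (n - t) * d))"
    by (simp only: power_add mult.assoc)
  finally have c0: "card {H. subgroup H G \<and> H \<subseteq> S \<and> pw 1 H = K}
     \<le> (\<Sum>t\<le>n. (n choose t) * p ^ (t * (n - t) + t + (n - t) * d))" .
  have "real (card {H. subgroup H G \<and> H \<subseteq> S \<and> pw 1 H = K})
     \<le> real (\<Sum>t\<le>n. (n choose t) * p ^ (t * (n - t) + t + (n - t) * d))"
    using c0 by (rule of_nat_mono)
  also have "\<dots> = (\<Sum>t\<le>n. real (n choose t) * real p ^ (t * (n - t) + t + (n - t) * d))"
    by (simp only: of_nat_sum of_nat_mult of_nat_power)
  also have "\<dots> \<le> (\<Sum>t\<le>n. real (n choose t) * real p powr (real n1 ^ 2 / 4 + real n1))"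
  proof (rule sum_mono)
    fix t assume t: "t \<in> {..n}"
    have "real p ^ (t * (n - t) + t + (n - t) * d) = real p powr real (t * (n - t) + t + (n - t) * d)"
      using p_gt1 by (intro powr_realpow[symmetric]) simp
    also have "\<dots> \<le> real p powr (real n1 ^ 2 / 4 + real n1)"
      using arith_real[of t n d] t p_gt1 n1 by (intro powr_mono) auto
    finally show "real (n choose t) * real p ^ (t * (n - t) + t + (n - t) * d) \<le> real (n choose t) * real p powr (real n1 ^ 2 / 4 + real n1)"
      by (intro mult_left_mono) auto
  qed
  also have "\<dots> = real (2 ^ n) * real p powr (real n1 ^ 2 / 4 + real n1)"
    by (simp only: sum_distrib_right[symmetric] of_nat_sum[symmetric] choose_row_sum)
  also have "\<dots> \<le> real p powr real n1 * real p powr (real n1 ^ 2 / 4 + real n1)"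
  proof (rule mult_right_mono)
    have "(2::nat) ^ n \<le> 2 ^ n1" using n1 by (intro power_increasing) auto
    also have "\<dots> \<le> p ^ n1" using p_gt1 by (intro power_mono) auto
    finally have "(2::nat) ^ n \<le> p ^ n1" .
    then have "real (2 ^ n) \<le> real (p ^ n1)" by (simp only: of_nat_le_iff)
    moreover have "real (p ^ n1) = real p powr real n1" using p_gt1 by (simp add: powr_realpow)
    ultimately show "real (2 ^ n) \<le> real p powr real n1" by simp
  qed simp
  also have "\<dots> = real p powr (real n1 ^ 2 / 4 + 2 * real n1)"
    by (simp add: powr_add[symmetric] add.commute)
  finally show ?thesis .
qed


lemma step_bound:
  assumes S: "subgroup S G" and cE: "card (S \<inter> Om 1) = p ^ n1"
  shows "real (card (SubIn S)) \<le> real (card (SubIn (pw 1 S))) * real p powr (real n1 ^ 2 / 4 + 2 * real n1)"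
proof -
  let ?fib = "\<lambda>K. {H. subgroup H G \<and> H \<subseteq> S \<and> pw 1 H = K}"
  have cov: "SubIn S \<subseteq> (\<Union>K\<in>SubIn (pw 1 S). ?fib K)"
  proof
    fix H assume "H \<in> SubIn S"
    then have H: "subgroup H G" "H \<subseteq> S" unfolding SubIn_def by auto
    have "pw 1 H \<in> SubIn (pw 1 S)" unfolding SubIn_def using pw_sub[OF H(1)] pw_mono[OF H(2)] by blast
    then show "H \<in> (\<Union>K\<in>SubIn (pw 1 S). ?fib K)" using H by blast
  qed
  have "card (SubIn S) \<le> card (\<Union>K\<in>SubIn (pw 1 S). ?fib K)"
  proof (rule card_mono[OF _ cov])
    have "(\<Union>K\<in>SubIn (pw 1 S). ?fib K) \<subseteq> SubIn S" unfolding SubIn_def by blast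
    then show "finite (\<Union>K\<in>SubIn (pw 1 S). ?fib K)" using SubIn_finite finite_subset by blast
  qed
  also have "\<dots> \<le> (\<Sum>K\<in>SubIn (pw 1 S). card (?fib K))" by (rule card_UN_le[OF SubIn_finite])
  finally have "real (card (SubIn S)) \<le> real (\<Sum>K\<in>SubIn (pw 1 S). card (?fib K))" by (rule of_nat_mono)
  also have "\<dots> = (\<Sum>K\<in>SubIn (pw 1 S). real (card (?fib K)))" by (rule of_nat_sum)
  also have "\<dots> \<le> (\<Sum>K\<in>SubIn (pw 1 S). real p powr (real n1 ^ 2 / 4 + 2 * real n1))"
  proof (rule sum_mono)
    fix K assume "K \<in> SubIn (pw 1 S)"
    then have K: "subgroup K G" "K \<subseteq> pw 1 S" unfolding SubIn_def by auto
    show "real (card (?fib K)) \<le> real p powr (real n1 ^ 2 / 4 + 2 * real n1)"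
      using fib_bound[OF S cE K] .
  qed
  also have "\<dots> = real (card (SubIn (pw 1 S))) * real p powr (real n1 ^ 2 / 4 + 2 * real n1)" by simp
  finally show ?thesis .
qed

definition bnd :: "nat \<Rightarrow> real" where "bnd i = real p powr (real (e i) ^ 2 / 4 + 2 * real (e i))"

lemma iter_bound:
  "real (card (SubIn (pw j (carrier G)))) \<le> real (card (SubIn (pw (j + k) (carrier G)))) * (\<Prod>i\<in>{Suc j..j + k}. bnd i)"
proof (induction k)
  case 0 then show ?case by simp
next
  case (Suc k)
  let ?S = "pw (j + k) (carrier G)"
  have S: "subgroup ?S G" using pw_sub[OF subgroup_self] .
  have cE: "card (?S \<inter> Om 1) = p ^ e (Suc (j + k))"
    using card_Ep[of "j + k"] unfolding Ep_def by (simp add: Int_commute)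
  have p1: "pw 1 ?S = pw (j + Suc k) (carrier G)" using pw_pw[of "carrier G" 1 "j + k"] by simp
  have st: "real (card (SubIn ?S)) \<le> real (card (SubIn (pw (j + Suc k) (carrier G)))) * bnd (Suc (j + k))"
    using step_bound[OF S cE] p1 unfolding bnd_def by simp
  have "{Suc j..j + Suc k} = insert (Suc (j + k)) {Suc j..j + k}" by auto
  then have pr: "(\<Prod>i\<in>{Suc j..j + Suc k}. bnd i) = bnd (Suc (j + k)) * (\<Prod>i\<in>{Suc j..j + k}. bnd i)"
    by simp
  have "real (card (SubIn (pw j (carrier G)))) \<le> real (card (SubIn ?S)) * (\<Prod>i\<in>{Suc j..j + k}. bnd i)"
    using Suc.IH .
  also have "\<dots> \<le> real (card (SubIn (pw (j + Suc k) (carrier G)))) * bnd (Suc (j + k)) * (\<Prod>i\<in>{Suc j..j + k}. bnd i)"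
    using st by (intro mult_right_mono) (auto simp: bnd_def intro: prod_nonneg)
  finally show ?case unfolding pr by (simp add: mult.assoc)
qed

lemma upper_main: "real (card (Sub G)) \<le> (\<Prod>i\<in>{1..\<alpha>}. bnd i)"
proof -
  have "Sub G = SubIn (pw 0 (carrier G))" unfolding Sub_def SubIn_def using pw_0[of "carrier G"] subgroup.subset by auto
  moreover have "SubIn (pw \<alpha> (carrier G)) = {{\<one>}}"
  proof -
    have pa: "pw \<alpha> (carrier G) = {\<one>}" using pw_alpha[OF subgroup_self] .
    have "SubIn {\<one>} = {{\<one>}}"
    proof
      show "SubIn {\<one>} \<subseteq> {{\<one>}}" unfolding SubIn_def using subgroup.one_closed by blast
      show "{{\<one>}} \<subseteq> SubIn {\<one>}" unfolding SubIn_def using triv_subgroup by blast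
    qed
    then show ?thesis using pa by simp
  qed
  ultimately show ?thesis using iter_bound[of 0 \<alpha>] by simp
qed

end

lemma term_ineq:
  fixes x :: nat
  shows "real x ^ 2 / 4 - real x \<le> real x * real (x div 2) - real (x div 2) * real (x div 2)"
proof -
  define r where "r = x mod 2"
  have r: "x = 2 * (x div 2) + r" "r \<le> 1" unfolding r_def by auto
  show ?thesis
  proof (cases "r = 0")
    case True
    then have "real x = 2 * real (x div 2)" using r by simp
    then show ?thesis by (simp add: power2_eq_square algebra_simps)
  next
    case False
    then have "real x = 2 * real (x div 2) + 1" using r by simp
    then show ?thesis by (simp add: power2_eq_square algebra_simps)
  qed
qed

context pgrp begin

lemma prod_restrict:
  "(\<Prod>i\<in>{i. 1 \<le> i \<and> e i \<noteq> 0}. real p powr (real (e i) ^ 2 / 4)) = (\<Prod>i\<in>{1..\<alpha>}. real p powr (real (e i) ^ 2 / 4))"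
proof (rule prod.mono_neutral_left)
  show "finite {1..\<alpha>}" by simp
  show "{i. 1 \<le> i \<and> e i \<noteq> 0} \<subseteq> {1..\<alpha>}"
  proof
    fix i assume i: "i \<in> {i. 1 \<le> i \<and> e i \<noteq> 0}"
    have "i \<le> \<alpha>"
    proof (rule ccontr)
      assume "\<not> i \<le> \<alpha>"
      then have "e i = 0" using e_zero by simp
      then show False using i by simp
    qed
    then show "i \<in> {1..\<alpha>}" using i by simp
  qed
  show "\<forall>i\<in>{1..\<alpha>} - {i. 1 \<le> i \<and> e i \<noteq> 0}. real p powr (real (e i) ^ 2 / 4) = 1"
  proof
    fix i assume "i \<in> {1..\<alpha>} - {i. 1 \<le> i \<and> e i \<noteq> 0}"
    then have "e i = 0" by simp
    then show "real p powr (real (e i) ^ 2 / 4) = 1" using p_gt1 by simp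
  qed
qed

lemma P_eq: "(\<Prod>i\<in>{1..\<alpha>}. real p powr (real (e i) ^ 2 / 4)) = real p powr (\<Sum>i\<in>{1..\<alpha>}. real (e i) ^ 2 / 4)"
  using p_gt1 by (simp add: powr_sum)

lemma powr_nat: "real p powr real n = real p ^ n"
  using p_gt1 by (intro powr_realpow) simp

lemma upper_final:
  "real (card (Sub G)) \<le> real (card (carrier G)) ^ 2 * (\<Prod>i\<in>{1..\<alpha>}. real p powr (real (e i) ^ 2 / 4))"
proof -
  have p0: "real p \<noteq> 0" using p_gt1 by simp
  have b: "bnd i = real p powr (2 * real (e i)) * real p powr (real (e i) ^ 2 / 4)" for i
    unfolding bnd_def powr_add by (rule mult.commute)
  have "(\<Prod>i\<in>{1..\<alpha>}. bnd i) = (\<Prod>i\<in>{1..\<alpha>}. real p powr (2 * real (e i))) * (\<Prod>i\<in>{1..\<alpha>}. real p powr (real (e i) ^ 2 / 4))"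
    unfolding b by (rule prod.distrib)
  also have "(\<Prod>i\<in>{1..\<alpha>}. real p powr (2 * real (e i))) = real p powr (\<Sum>i\<in>{1..\<alpha>}. 2 * real (e i))"
    by (rule powr_sum[OF p0, symmetric])
  also have "(\<Sum>i\<in>{1..\<alpha>}. 2 * real (e i)) = real (2 * \<alpha>)"
  proof -
    have "(\<Sum>i\<in>{1..\<alpha>}. 2 * real (e i)) = 2 * (\<Sum>i\<in>{1..\<alpha>}. real (e i))" by (rule sum_distrib_left[symmetric])
    moreover have "(\<Sum>i\<in>{1..\<alpha>}. real (e i)) = real \<alpha>" using sum_e by (simp only: of_nat_sum[symmetric])
    ultimately show ?thesis by simp
  qed
  also have "real p powr real (2 * \<alpha>) = real (card (carrier G)) ^ 2"
  proof -
    have "real p powr real (2 * \<alpha>) = real p ^ (2 * \<alpha>)" by (rule powr_nat)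
    also have "\<dots> = (real p ^ \<alpha>) ^ 2" by (rule power_even_eq)
    also have "real p ^ \<alpha> = real (card (carrier G))" using cardG by simp
    finally show ?thesis .
  qed
  finally show ?thesis using upper_main by simp
qed

lemma lower_final:
  "inverse (real (card (carrier G))) * (\<Prod>i\<in>{1..\<alpha>}. real p powr (real (e i) ^ 2 / 4)) \<le> real (card (Sub G))"
proof -
  have p0: "real p > 0" using p_gt1 by simp
  let ?A = "\<Sum>k\<in>{1..\<alpha>}. e k * R k" and ?B = "\<Sum>k\<in>{1..\<alpha>}. R k * R k"
  have "real (p ^ ?A) \<le> real (card (Sub G) * p ^ ?B)" using lower_nat by (rule of_nat_mono)
  then have "real p powr real ?A \<le> real (card (Sub G)) * real p powr real ?B"
    unfolding powr_nat by simp
  then have L: "real p powr (real ?A - real ?B) \<le> real (card (Sub G))"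
    unfolding powr_diff using p0 by (simp add: divide_le_eq)
  have lhs: "inverse (real (card (carrier G))) * (\<Prod>i\<in>{1..\<alpha>}. real p powr (real (e i) ^ 2 / 4))
    = real p powr ((\<Sum>i\<in>{1..\<alpha>}. real (e i) ^ 2 / 4) - (\<Sum>i\<in>{1..\<alpha>}. real (e i)))"
  proof -
    have "(\<Sum>i\<in>{1..\<alpha>}. real (e i)) = real \<alpha>" using sum_e by (simp only: of_nat_sum[symmetric])
    moreover have "real p powr real \<alpha> = real (card (carrier G))" unfolding powr_nat cardG by simp
    ultimately have c: "real (card (carrier G)) = real p powr (\<Sum>i\<in>{1..\<alpha>}. real (e i))" by simp
    show ?thesis unfolding P_eq powr_diff c by (simp only: divide_inverse mult.commute)
  qed
  have "(\<Sum>i\<in>{1..\<alpha>}. real (e i) ^ 2 / 4) - (\<Sum>i\<in>{1..\<alpha>}. real (e i)) = (\<Sum>i\<in>{1..\<alpha>}. real (e i) ^ 2 / 4 - real (e i))"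
    by (rule sum_subtractf[symmetric])
  also have "\<dots> \<le> (\<Sum>i\<in>{1..\<alpha>}. real (e i) * real (R i) - real (R i) * real (R i))"
    by (rule sum_mono) (unfold R_def, rule term_ineq)
  also have "\<dots> = real ?A - real ?B" by (simp add: sum_subtractf)
  finally have "real p powr ((\<Sum>i\<in>{1..\<alpha>}. real (e i) ^ 2 / 4) - (\<Sum>i\<in>{1..\<alpha>}. real (e i))) \<le> real p powr (real ?A - real ?B)"
    using p_gt1 by (intro powr_mono) auto
  then show ?thesis using L lhs by simp
qed

end

theorem corollary6p4:
  fixes G :: "('a, 'b) monoid_scheme" and p \<alpha> :: nat
  assumes "comm_group G" and "finite (carrier G)" and "Factorial_Ring.prime p"
    and "card (carrier G) = p ^ \<alpha>"
  shows "inverse (real (card (carrier G))) *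
           (\<Prod>i\<in>{i. 1 \<le> i \<and> layer G p i \<noteq> 0}. real p powr (real (layer G p i) ^ 2 / 4))
           \<le> real (card (Sub G))
       \<and> real (card (Sub G))
           \<le> real (card (carrier G)) ^ 2 *
             (\<Prod>i\<in>{i. 1 \<le> i \<and> layer G p i \<noteq> 0}. real p powr (real (layer G p i) ^ 2 / 4))"
proof -
  have "pgrp G p \<alpha>" unfolding pgrp_def pgrp_axioms_def using assms by blast
  then interpret pgrp G p \<alpha> .
  show ?thesis unfolding prod_restrict using lower_final upper_final by (rule conjI)
qed

end
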